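(* Let $0<\underline{b}<\overline{b}<\infty$, $0<\underline{\alpha}<\overline{\alpha}<\infty$, $\overline{\theta}>0$. Let $\alpha_0\in[\underline{\alpha},\overline{\alpha}]$, $\theta_0$ supported in $[\underline{b},\overline{b}]$ with $\|\theta_0\|_\infty<\overline{\theta}$, and $v_0=v_{\alpha_0,\theta_0}$. Then there is a constant $C$, independent of $v$, such that for every $v=v_{\alpha,\theta}$ in the support of the prior, \[ d_{\mathcal H}(\mathbb{Q}_{v_0},\mathbb{Q}_v)\le C\big(|\alpha-\alpha_0|+\|\theta-\theta_0\|_\infty\big). \]
   Context: $v_{\alpha,\theta}(x)=x^{-1}e^{-\alpha x-\theta(x)}$, $x>0$. $\mathbb{Q}_v$ is the law of $X_1$ for the Lévy process with triplet $(\gamma,0,\nu)$, $\nu(\mathrm{d}x)=v(x)\mathrm{d}x$ on $(0,\infty)$, $\gamma=\int_0^1x\,\nu(\mathrm{d}x)$. The prior support consists of $v_{\alpha,\theta}$ with $\alpha\in[\underline{\alpha},\overline{\alpha}]$ and, for a grid $\underline{b}=b_1<\dots<b_N=\overline{b}$, $\theta(x)=\rho_k+\theta_kx$ on $(b_k,b_{k+1}]$, $\theta=0$ outside $(\underline{b},\overline{b}]$, $\rho_k,\theta_k\in[-\overline{\theta},\overline{\theta}]$. $d^2_{\mathcal H}(P,Q)=\frac12\int(\sqrt{\mathrm{d}P}-\sqrt{\mathrm{d}Q})^2$. *)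

theory Defs
  imports "HOL-Probability.Probability"
begin

definition levy_dens :: "real \<Rightarrow> (real \<Rightarrow> real) \<Rightarrow> real \<Rightarrow> real" where
  "levy_dens a th x = (if 0 < x then exp (- a * x - th x) / x else 0)"

definition levy_drift :: "(real \<Rightarrow> real) \<Rightarrow> real" where
  "levy_drift v = set_lebesgue_integral lborel {0<..1} (\<lambda>x. x * v x)"

definition levy_exponent :: "(real \<Rightarrow> real) \<Rightarrow> real \<Rightarrow> complex" where
  "levy_exponent v u =
     \<i> * complex_of_real (levy_drift v * u)
     + set_lebesgue_integral lborel {0<..}
         (\<lambda>x. (iexp (u * x) - 1 - \<i> * complex_of_real (u * x) * indicator {..1} x)
              * complex_of_real (v x))"

text \<open>P is the law of X_1 of the Levy process with triplet (gamma,0,nu), gamma = int_0^1 x nu(dx).\<close>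
definition is_levy_law :: "(real \<Rightarrow> real) \<Rightarrow> real measure \<Rightarrow> bool" where
  "is_levy_law v P \<longleftrightarrow> prob_space P \<and> sets P = sets borel \<and>
     (\<forall>u. char P u = exp (levy_exponent v u))"

definition sum_measure :: "'a measure \<Rightarrow> 'a measure \<Rightarrow> 'a measure" where
  "sum_measure P Q = measure_of (space P) (sets P) (\<lambda>A. emeasure P A + emeasure Q A)"

definition hellinger :: "'a measure \<Rightarrow> 'a measure \<Rightarrow> real" where
  "hellinger P Q = (let \<mu> = sum_measure P Q in
     sqrt ((1/2) * (\<integral>x. (sqrt (enn2real (RN_deriv \<mu> P x)) - sqrt (enn2real (RN_deriv \<mu> Q x)))\<^sup>2 \<partial>\<mu>)))"

definition grid_theta :: "(nat \<Rightarrow> real) \<Rightarrow> nat \<Rightarrow> (nat \<Rightarrow> real) \<Rightarrow> (nat \<Rightarrow> real) \<Rightarrow> real \<Rightarrow> real" where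
  "grid_theta b N \<rho> t x = (\<Sum>k\<in>{1..<N}. indicator {b k<..b (Suc k)} x * (\<rho> k + t k * x))"

end

theory Submission
  imports Defs
begin


lemma sum_measure_density:
  fixes p q :: "real \<Rightarrow> real"
  assumes [measurable]: "p \<in> borel_measurable borel" "q \<in> borel_measurable borel"
    and "\<And>x. 0 \<le> p x" "\<And>x. 0 \<le> q x"
  shows "sum_measure (density lborel p) (density lborel q) = density lborel (\<lambda>x. p x + q x)"
proof -
  have "sum_measure (density lborel p) (density lborel q) =
     measure_of UNIV (sets borel) (\<lambda>A. emeasure (density lborel p) A + emeasure (density lborel q) A)"
    unfolding sum_measure_def by simp
  also have "\<dots> = measure_of UNIV (sets borel) (emeasure (density lborel (\<lambda>x. p x + q x)))"
  proof (rule measure_of_eq)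
    fix A :: "real set" assume "A \<in> sigma_sets UNIV (sets borel)"
    then have A: "A \<in> sets borel"
      by (metis sets.sigma_sets_eq space_borel)
    show "emeasure (density lborel p) A + emeasure (density lborel q) A = emeasure (density lborel (\<lambda>x. p x + q x)) A"
    proof -
      have "(\<integral>\<^sup>+x\<in>A. ennreal (p x + q x) \<partial>lborel) = (\<integral>\<^sup>+x. ennreal (p x) * indicator A x + ennreal (q x) * indicator A x \<partial>lborel)"
        using assms(3,4) by (intro nn_integral_cong) (auto simp: indicator_def)
      then show ?thesis using A by (simp add: emeasure_density nn_integral_add)
    qed
  qed simp
  also have "\<dots> = density lborel (\<lambda>x. p x + q x)"
    using measure_of_of_measure[of "density lborel (\<lambda>x. p x + q x)"] by simp
  finally show ?thesis .
qed

lemma hellinger_density: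
  fixes p q :: "real \<Rightarrow> real"
  assumes [measurable]: "p \<in> borel_measurable borel" "q \<in> borel_measurable borel"
    and p0: "\<And>x. 0 \<le> p x" and q0: "\<And>x. 0 \<le> q x"
    and ip: "(\<integral>\<^sup>+x. p x \<partial>lborel) = 1" and iq: "(\<integral>\<^sup>+x. q x \<partial>lborel) = 1"
  shows "(hellinger (density lborel p) (density lborel q))\<^sup>2 = 1 - (\<integral>x. sqrt (p x * q x) \<partial>lborel)"
proof -
  define \<mu> where "\<mu> = density lborel (\<lambda>x. p x + q x)"
  have smu: "sum_measure (density lborel p) (density lborel q) = \<mu>"
    unfolding \<mu>_def using assms by (intro sum_measure_density) auto
  have intp: "integrable lborel p" and intq: "integrable lborel q"
    using ip iq p0 q0 by (auto intro!: integrableI_nn_integral_finite)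
  have Ip: "(\<integral>x. p x \<partial>lborel) = 1" and Iq: "(\<integral>x. q x \<partial>lborel) = 1"
    using ip iq p0 q0 by (subst integral_eq_nn_integral; simp)+
  have fin: "finite_measure \<mu>"
  proof
    have "emeasure \<mu> (space \<mu>) = (\<integral>\<^sup>+x. ennreal (p x + q x) \<partial>lborel)"
      unfolding \<mu>_def by (simp add: emeasure_density)
    also have "\<dots> = 2" using ip iq p0 q0 by (simp add: nn_integral_add)
    finally show "emeasure \<mu> (space \<mu>) \<noteq> \<infinity>" by simp
  qed
  then interpret finite_measure \<mu> .
  define fp where "fp x = (if p x + q x = 0 then 0 else p x / (p x + q x))" for x
  define fq where "fq x = (if p x + q x = 0 then 0 else q x / (p x + q x))" for x
  have [measurable]: "fp \<in> borel_measurable borel" "fq \<in> borel_measurable borel"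
    unfolding fp_def fq_def by measurable
  have dp: "density \<mu> fp = density lborel p"
    unfolding \<mu>_def
    apply (subst density_density_eq) apply simp apply simp
    apply (rule density_cong) apply simp apply simp
    using p0 q0 by (auto simp: fp_def ennreal_mult[symmetric] simp del: ennreal_plus intro!: AE_I2 dest: add_nonneg_eq_0_iff[THEN iffD1, rotated 2])
  have dq: "density \<mu> fq = density lborel q"
    unfolding \<mu>_def
    apply (subst density_density_eq) apply simp apply simp
    apply (rule density_cong) apply simp apply simp
    using p0 q0 by (auto simp: fq_def ennreal_mult[symmetric] simp del: ennreal_plus intro!: AE_I2 dest: add_nonneg_eq_0_iff[THEN iffD1, rotated 2])
  have sm: "space \<mu> = UNIV" "sets \<mu> = sets borel" unfolding \<mu>_def by auto
  have aep: "AE x in \<mu>. ennreal (fp x) = RN_deriv \<mu> (density lborel p) x"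
    using RN_deriv_unique[of "\<lambda>x. ennreal (fp x)" "density lborel p"] dp
    by (simp add: measurable_cong_sets[OF sm(2) refl])
  have aeq: "AE x in \<mu>. ennreal (fq x) = RN_deriv \<mu> (density lborel q) x"
    using RN_deriv_unique[of "\<lambda>x. ennreal (fq x)" "density lborel q"] dq
    by (simp add: measurable_cong_sets[OF sm(2) refl])
  have mu_meas: "borel_measurable \<mu> = borel_measurable borel" by (simp add: measurable_cong_sets[OF sm(2) refl])
  have RNm: "RN_deriv \<mu> N \<in> borel_measurable borel" for N
    using borel_measurable_RN_deriv[of \<mu> N] unfolding mu_meas .
  have fp0: "0 \<le> fp x" "0 \<le> fq x" for x using p0 q0 by (auto simp: fp_def fq_def)
  have "(\<integral>x. (sqrt (enn2real (RN_deriv \<mu> (density lborel p) x)) - sqrt (enn2real (RN_deriv \<mu> (density lborel q) x)))\<^sup>2 \<partial>\<mu>)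
     = (\<integral>x. (sqrt (fp x) - sqrt (fq x))\<^sup>2 \<partial>\<mu>)"
    apply (rule integral_cong_AE)
    subgoal using RNm by measurable
    subgoal unfolding mu_meas by measurable
    subgoal using aep aeq by eventually_elim (metis enn2real_ennreal fp0)
    done
  also have "\<dots> = (\<integral>x. (p x + q x) * (sqrt (fp x) - sqrt (fq x))\<^sup>2 \<partial>lborel)"
    unfolding \<mu>_def using p0 q0 by (subst integral_density) (auto intro: add_nonneg_nonneg)
  also have "\<dots> = (\<integral>x. p x + q x - 2 * sqrt (p x * q x) \<partial>lborel)"
  proof (rule Bochner_Integration.integral_cong[OF refl])
    fix x
    show "(p x + q x) * (sqrt (fp x) - sqrt (fq x))\<^sup>2 = p x + q x - 2 * sqrt (p x * q x)"
    proof (cases "p x + q x = 0")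
      case True then show ?thesis using p0[of x] q0[of x] by (simp add: fp_def fq_def)
    next
      case False
      then have s: "p x + q x > 0" using p0[of x] q0[of x] by simp
      have "(sqrt (fp x) - sqrt (fq x))\<^sup>2 = fp x + fq x - 2 * sqrt (fp x * fq x)"
        using fp0[of x] by (simp add: power2_eq_square algebra_simps real_sqrt_mult)
      also have "fp x * fq x = (p x * q x) / (p x + q x)^2"
        using False by (simp add: fp_def fq_def power2_eq_square)
      also have "sqrt \<dots> = sqrt (p x * q x) / (p x + q x)"
        using s by (simp add: real_sqrt_divide)
      finally have e1: "(sqrt (fp x) - sqrt (fq x))\<^sup>2 = fp x + fq x - 2 * (sqrt (p x * q x) / (p x + q x))" .
      have "fp x + fq x = 1" using False by (simp add: fp_def fq_def add_divide_distrib[symmetric])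
      then have "(sqrt (fp x) - sqrt (fq x))\<^sup>2 = 1 - 2 * (sqrt (p x * q x) / (p x + q x))" using e1 by simp
      then show ?thesis using s by (simp add: field_simps)
    qed
  qed
  also have "\<dots> = 2 - 2 * (\<integral>x. sqrt (p x * q x) \<partial>lborel)"
  proof -
    have "integrable lborel (\<lambda>x. sqrt (p x * q x))"
    proof (rule Bochner_Integration.integrable_bound[of _ "\<lambda>x. p x + q x"])
      show "integrable lborel (\<lambda>x. p x + q x)" using intp intq by simp
      show "AE x in lborel. norm (sqrt (p x * q x)) \<le> norm (p x + q x)"
      proof (rule AE_I2)
        fix x
        have "sqrt (p x * q x) \<le> (p x + q x) / 2"
          using p0[of x] q0[of x] by (rule arith_geo_mean_sqrt)
        then show "norm (sqrt (p x * q x)) \<le> norm (p x + q x)"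
          using p0[of x] q0[of x] by auto
      qed
    qed simp
    then show ?thesis using intp intq Ip Iq by simp
  qed
  finally have e: "(\<integral>x. (sqrt (enn2real (RN_deriv \<mu> (density lborel p) x)) - sqrt (enn2real (RN_deriv \<mu> (density lborel q) x)))\<^sup>2 \<partial>\<mu>) = 2 - 2 * (\<integral>x. sqrt (p x * q x) \<partial>lborel)" .
  have nn: "0 \<le> (\<integral>x. (sqrt (enn2real (RN_deriv \<mu> (density lborel p) x)) - sqrt (enn2real (RN_deriv \<mu> (density lborel q) x)))\<^sup>2 \<partial>\<mu>)"
    by (rule integral_nonneg_AE) simp
  show ?thesis
    unfolding hellinger_def Let_def smu using e nn by simp
qed



lemma CS_real:
  fixes F G :: "'a \<Rightarrow> real"
  assumes [measurable]: "F \<in> borel_measurable M" "G \<in> borel_measurable M"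
    and F0: "\<And>x. 0 \<le> F x" and G0: "\<And>x. 0 \<le> G x"
    and IF: "(\<integral>\<^sup>+x. F x \<partial>M) = ennreal a" and IG: "(\<integral>\<^sup>+x. G x \<partial>M) = ennreal b"
    and a0: "0 \<le> a" and b0: "0 \<le> b"
  shows "(\<integral>\<^sup>+x. ennreal (sqrt (F x * G x)) \<partial>M) \<le> ennreal (sqrt (a * b))"
proof -
  have "(\<integral>\<^sup>+x. ennreal (sqrt (F x)) * ennreal (sqrt (G x)) \<partial>M)\<^sup>2
     \<le> (\<integral>\<^sup>+x. (ennreal (sqrt (F x)))\<^sup>2 \<partial>M) * (\<integral>\<^sup>+x. (ennreal (sqrt (G x)))\<^sup>2 \<partial>M)"
    by (rule Cauchy_Schwarz_nn_integral) auto
  also have "(\<lambda>x. (ennreal (sqrt (F x)))\<^sup>2) = (\<lambda>x. ennreal (F x))"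
  proof
    fix x have "(ennreal (sqrt (F x)))\<^sup>2 = ennreal ((sqrt (F x))\<^sup>2)" by (rule ennreal_power) (simp add: F0)
    then show "(ennreal (sqrt (F x)))\<^sup>2 = ennreal (F x)" using F0[of x] by simp
  qed
  also have "(\<lambda>x. (ennreal (sqrt (G x)))\<^sup>2) = (\<lambda>x. ennreal (G x))"
  proof
    fix x have "(ennreal (sqrt (G x)))\<^sup>2 = ennreal ((sqrt (G x))\<^sup>2)" by (rule ennreal_power) (simp add: G0)
    then show "(ennreal (sqrt (G x)))\<^sup>2 = ennreal (G x)" using G0[of x] by simp
  qed
  also have "(\<lambda>x. ennreal (sqrt (F x)) * ennreal (sqrt (G x))) = (\<lambda>x. ennreal (sqrt (F x * G x)))"
    using F0 G0 by (auto simp: ennreal_mult[symmetric] real_sqrt_mult)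
  finally have le: "(\<integral>\<^sup>+x. ennreal (sqrt (F x * G x)) \<partial>M)\<^sup>2 \<le> ennreal (a * b)"
    unfolding IF IG using a0 b0 by (simp add: ennreal_mult)
  define X where "X = (\<integral>\<^sup>+x. ennreal (sqrt (F x * G x)) \<partial>M)"
  have "X \<noteq> \<top>"
  proof
    assume "X = \<top>" then show False using le unfolding X_def[symmetric] by (simp add: power2_eq_square top_unique)
  qed
  then obtain t where t: "X = ennreal t" "0 \<le> t" by (cases X) auto
  then have "ennreal (t^2) \<le> ennreal (a*b)" using le unfolding X_def[symmetric] by (simp add: ennreal_power)
  then have "t^2 \<le> a * b" using a0 b0 by (simp add: ennreal_le_iff)
  then have "t \<le> sqrt (a * b)" using t(2) real_le_rsqrt by blast
  then show ?thesis unfolding X_def[symmetric] t by (rule ennreal_leI)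
qed

definition mass :: "(real \<Rightarrow> real) \<Rightarrow> real" where
  "mass r = (\<integral>x. r x \<partial>lborel)"

primrec fr :: "real \<Rightarrow> (real \<Rightarrow> real) \<Rightarrow> nat \<Rightarrow> real \<Rightarrow> real" where
  "fr A r 0 = exponential_density A"
| "fr A r (Suc n) = (\<lambda>x. \<integral>y. fr A r n (x - y) * r y \<partial>lborel)"

lemma nn_integral_shift:
  fixes f :: "real \<Rightarrow> ennreal"
  assumes [measurable]: "f \<in> borel_measurable borel"
  shows "(\<integral>\<^sup>+x. f (x - y) \<partial>lborel) = (\<integral>\<^sup>+x. f x \<partial>lborel)"
  using nn_integral_real_affine[of f 1 "-y"] by simp

lemma expd_props:
  assumes "0 < A"
  shows "exponential_density A \<in> borel_measurable borel"
    "0 \<le> exponential_density A x" "exponential_density A x \<le> A"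
    "(\<integral>\<^sup>+x. exponential_density A x \<partial>lborel) = 1"
proof -
  show "exponential_density A \<in> borel_measurable borel" by simp
  show "0 \<le> exponential_density A x" using assms by (simp add: exponential_density_def)
  show "exponential_density A x \<le> A" using assms by (simp add: exponential_density_def mult_le_cancel_left1)
  interpret prob_space "density lborel (exponential_density A)"
    using prob_space_exponential_density[OF assms] .
  have "emeasure (density lborel (exponential_density A)) UNIV = 1"
    using emeasure_space_1 by simp
  then show "(\<integral>\<^sup>+x. exponential_density A x \<partial>lborel) = 1"
    by (simp add: emeasure_density)
qed

locale cpr =
  fixes A :: real and r :: "real \<Rightarrow> real"
  assumes A_pos: "0 < A" and r_meas[measurable]: "r \<in> borel_measurable borel"
    and r_nn: "\<And>x. 0 \<le> r x" and r_int: "integrable lborel r"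
begin

lemma r_nnint: "(\<integral>\<^sup>+x. r x \<partial>lborel) = ennreal (mass r)"
  unfolding mass_def using r_int r_nn by (simp add: nn_integral_eq_integral)

lemma mass_nn: "0 \<le> mass r" unfolding mass_def using r_nn by simp

lemma fr_all:
  "fr A r n \<in> borel_measurable borel \<and> (\<forall>x. 0 \<le> fr A r n x \<and> fr A r n x \<le> A * mass r ^ n)
   \<and> (\<integral>\<^sup>+x. fr A r n x \<partial>lborel) = ennreal (mass r ^ n)"
proof (induction n)
  case 0
  then show ?case using expd_props[OF A_pos] by simp
next
  case (Suc n)
  have [measurable]: "fr A r n \<in> borel_measurable borel" using Suc by blast
  have b: "0 \<le> fr A r n x" "fr A r n x \<le> A * mass r ^ n" for x using Suc by auto
  have I: "(\<integral>\<^sup>+x. fr A r n x \<partial>lborel) = ennreal (mass r ^ n)" using Suc by blast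
  have intg: "integrable lborel (\<lambda>y. fr A r n (x - y) * r y)" for x
  proof (rule Bochner_Integration.integrable_bound[of _ "\<lambda>y. (A * mass r ^ n) * r y"])
    show "integrable lborel (\<lambda>y. (A * mass r ^ n) * r y)" using r_int by simp
    show "AE y in lborel. norm (fr A r n (x - y) * r y) \<le> norm ((A * mass r ^ n) * r y)"
      using b r_nn A_pos mass_nn by (intro AE_I2) (simp add: abs_mult mult_right_mono)
  qed simp
  have m: "fr A r (Suc n) \<in> borel_measurable borel"
    by simp measurable
  have nn: "0 \<le> fr A r (Suc n) x" for x
    using b r_nn by (simp add: integral_nonneg)
  have le: "fr A r (Suc n) x \<le> A * mass r ^ Suc n" for x
  proof -
    have "fr A r (Suc n) x \<le> (\<integral>y. (A * mass r ^ n) * r y \<partial>lborel)"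
      unfolding fr.simps by (rule integral_mono) (use intg r_int b r_nn in \<open>auto intro!: mult_right_mono\<close>)
    also have "\<dots> = A * mass r ^ Suc n" by (simp add: mass_def)
    finally show ?thesis .
  qed
  have pw: "ennreal (fr A r (Suc n) x) = (\<integral>\<^sup>+y. ennreal (fr A r n (x - y) * r y) \<partial>lborel)" for x
    using intg[of x] b r_nn by (simp add: nn_integral_eq_integral)
  have "(\<integral>\<^sup>+x. fr A r (Suc n) x \<partial>lborel) = (\<integral>\<^sup>+x. \<integral>\<^sup>+y. ennreal (fr A r n (x - y)) * ennreal (r y) \<partial>lborel \<partial>lborel)"
    using pw b r_nn by (simp add: ennreal_mult)
  also have "\<dots> = (\<integral>\<^sup>+y. \<integral>\<^sup>+x. ennreal (fr A r n (x - y)) * ennreal (r y) \<partial>lborel \<partial>lborel)"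
    by (rule lborel_pair.Fubini'[symmetric]) measurable
  also have "\<dots> = (\<integral>\<^sup>+y. ennreal (r y) * \<integral>\<^sup>+x. ennreal (fr A r n (x - y)) \<partial>lborel \<partial>lborel)"
    by (simp add: nn_integral_cmult mult.commute)
  also have "\<dots> = (\<integral>\<^sup>+y. ennreal (r y) * ennreal (mass r ^ n) \<partial>lborel)"
    by (subst nn_integral_shift[of "\<lambda>x. ennreal (fr A r n x)"]) (auto simp: I)
  also have "\<dots> = ennreal (mass r ^ Suc n)"
    using r_nnint mass_nn by (simp add: nn_integral_multc ennreal_mult[symmetric] mult.commute)
  finally show ?case using m nn le by blast
qed

lemma fr_meas[measurable]: "fr A r n \<in> borel_measurable borel" using fr_all by blast
lemma fr_nn: "0 \<le> fr A r n x" using fr_all by blast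
lemma fr_le: "fr A r n x \<le> A * mass r ^ n" using fr_all by blast
lemma fr_nnint: "(\<integral>\<^sup>+x. fr A r n x \<partial>lborel) = ennreal (mass r ^ n)" using fr_all by blast
lemma fr_int: "integrable lborel (fr A r n)"
  using fr_nnint fr_nn by (intro integrableI_nn_integral_finite) auto
lemma fr_integral: "(\<integral>x. fr A r n x \<partial>lborel) = mass r ^ n"
  using fr_nnint fr_nn mass_nn by (subst integral_eq_nn_integral) auto

lemma fr_conv_int: "integrable lborel (\<lambda>y. fr A r n (x - y) * r y)"
proof (rule Bochner_Integration.integrable_bound[of _ "\<lambda>y. (A * mass r ^ n) * r y"])
  show "integrable lborel (\<lambda>y. (A * mass r ^ n) * r y)" using r_int by simp
  show "AE y in lborel. norm (fr A r n (x - y) * r y) \<le> norm ((A * mass r ^ n) * r y)"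
    using fr_nn fr_le r_nn A_pos mass_nn by (intro AE_I2) (simp add: abs_mult mult_right_mono)
qed simp

lemma fr_Suc_nn: "ennreal (fr A r (Suc n) x) = (\<integral>\<^sup>+y. ennreal (fr A r n (x - y) * r y) \<partial>lborel)"
  using fr_conv_int[of n x] fr_nn r_nn by (simp add: nn_integral_eq_integral)

end



lemma series_CS:
  fixes a b :: "nat \<Rightarrow> real"
  assumes a0: "\<And>n. 0 \<le> a n" and b0: "\<And>n. 0 \<le> b n" and sa: "summable a" and sb: "summable b"
  shows "(\<Sum>n. ennreal (sqrt (a n * b n))) \<le> ennreal (sqrt ((\<Sum>n. a n) * (\<Sum>n. b n)))"
proof -
  have "(\<integral>\<^sup>+n. ennreal (sqrt (a n * b n)) \<partial>count_space UNIV) \<le> ennreal (sqrt ((\<Sum>n. a n) * (\<Sum>n. b n)))"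
  proof (rule CS_real)
    show "(\<integral>\<^sup>+n. ennreal (a n) \<partial>count_space UNIV) = ennreal (\<Sum>n. a n)"
      using a0 sa by (simp add: nn_integral_count_space_nat suminf_ennreal2)
    show "(\<integral>\<^sup>+n. ennreal (b n) \<partial>count_space UNIV) = ennreal (\<Sum>n. b n)"
      using b0 sb by (simp add: nn_integral_count_space_nat suminf_ennreal2)
  qed (use a0 b0 sa sb in \<open>auto intro: suminf_nonneg\<close>)
  then show ?thesis by (simp add: nn_integral_count_space_nat)
qed

definition pd :: "real \<Rightarrow> (real \<Rightarrow> real) \<Rightarrow> real \<Rightarrow> real" where
  "pd A r x = exp (- mass r) * (\<Sum>n. fr A r n x / fact n)"

context cpr begin

lemma fr_summable: "summable (\<lambda>n. fr A r n x / fact n)"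
proof (rule summable_comparison_test'[of "\<lambda>n. A * (mass r ^ n / fact n)"])
  show "summable (\<lambda>n. A * (mass r ^ n / fact n))"
    using exp_converges[of "mass r"] by (intro summable_mult) (simp add: sums_iff divide_inverse mult.commute)
  show "norm (fr A r n x / fact n) \<le> A * (mass r ^ n / fact n)" for n
    using fr_nn[of n x] fr_le[of n x] by (simp add: divide_right_mono)
qed

lemma pd_meas[measurable]: "pd A r \<in> borel_measurable borel"
  unfolding pd_def by measurable

lemma pd_nn: "0 \<le> pd A r x"
  unfolding pd_def using fr_summable fr_nn by (intro mult_nonneg_nonneg suminf_nonneg) auto

lemma pd_ennreal: "ennreal (pd A r x) = ennreal (exp (- mass r)) * (\<Sum>n. ennreal (fr A r n x / fact n))"
proof -
  have "0 \<le> (\<Sum>n. fr A r n x / fact n)" using fr_summable fr_nn by (intro suminf_nonneg) auto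
  then show ?thesis unfolding pd_def using fr_summable fr_nn
    by (subst suminf_ennreal2) (auto simp: ennreal_mult)
qed

lemma pd_nnint: "(\<integral>\<^sup>+x. pd A r x \<partial>lborel) = 1"
proof -
  have "(\<integral>\<^sup>+x. pd A r x \<partial>lborel) = ennreal (exp (- mass r)) * (\<Sum>n. \<integral>\<^sup>+x. ennreal (fr A r n x / fact n) \<partial>lborel)"
    unfolding pd_ennreal by (simp add: nn_integral_cmult nn_integral_suminf)
  also have "(\<lambda>n. \<integral>\<^sup>+x. ennreal (fr A r n x / fact n) \<partial>lborel) = (\<lambda>n. ennreal (mass r ^ n / fact n))"
  proof
    fix n
    have "(\<integral>\<^sup>+x. ennreal (fr A r n x / fact n) \<partial>lborel) = (\<integral>\<^sup>+x. ennreal (fr A r n x) * ennreal (1 / fact n) \<partial>lborel)"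
      using fr_nn by (simp add: ennreal_mult[symmetric])
    also have "\<dots> = ennreal (mass r ^ n) * ennreal (1 / fact n)"
      by (simp add: nn_integral_multc fr_nnint)
    finally show "(\<integral>\<^sup>+x. ennreal (fr A r n x / fact n) \<partial>lborel) = ennreal (mass r ^ n / fact n)"
      using mass_nn by (simp add: ennreal_mult[symmetric])
  qed
  also have "(\<Sum>n. ennreal (mass r ^ n / fact n)) = ennreal (exp (mass r))"
    using exp_converges[of "mass r"] mass_nn by (intro suminf_ennreal_eq) (auto simp: divide_inverse mult.commute)
  finally show ?thesis by (simp add: ennreal_mult[symmetric] mult_exp_exp)
qed

lemma pd_int: "integrable lborel (pd A r)"
  using pd_nnint pd_nn by (intro integrableI_nn_integral_finite) auto

end

locale cpr2 = c0: cpr A r0 + c1: cpr A r1 for A r0 r1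
begin

lemma sq_int: "integrable lborel (\<lambda>x. sqrt (r0 x * r1 x))"
proof (rule Bochner_Integration.integrable_bound[of _ "\<lambda>x. r0 x + r1 x"])
  show "integrable lborel (\<lambda>x. r0 x + r1 x)" using c0.r_int c1.r_int by simp
  show "AE x in lborel. norm (sqrt (r0 x * r1 x)) \<le> norm (r0 x + r1 x)"
  proof (rule AE_I2)
    fix x
    have "sqrt (r0 x * r1 x) \<le> (r0 x + r1 x) / 2"
      using c0.r_nn[of x] c1.r_nn[of x] by (rule arith_geo_mean_sqrt)
    then show "norm (sqrt (r0 x * r1 x)) \<le> norm (r0 x + r1 x)"
      using c0.r_nn[of x] c1.r_nn[of x] by auto
  qed
qed simp

definition "cc = (\<integral>x. sqrt (r0 x * r1 x) \<partial>lborel)"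

lemma cc_nn: "0 \<le> cc" unfolding cc_def by (rule Bochner_Integration.integral_nonneg) (use c0.r_nn c1.r_nn in simp)

lemma cc_nnint: "(\<integral>\<^sup>+x. ennreal (sqrt (r0 x * r1 x)) \<partial>lborel) = ennreal cc"
  unfolding cc_def using sq_int by (rule nn_integral_eq_integral) (use c0.r_nn c1.r_nn in simp)

lemma S_bound: "ennreal (cc ^ n) \<le> (\<integral>\<^sup>+x. ennreal (sqrt (fr A r0 n x * fr A r1 n x)) \<partial>lborel)"
proof (induction n)
  case 0
  have "(\<integral>\<^sup>+x. ennreal (sqrt (fr A r0 0 x * fr A r1 0 x)) \<partial>lborel) = (\<integral>\<^sup>+x. exponential_density A x \<partial>lborel)"
    using expd_props(2)[OF c0.A_pos] by (simp add: real_sqrt_mult_self)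
  then show ?case using expd_props(4)[OF c0.A_pos] by simp
next
  case (Suc n)
  define h where "h x = sqrt (fr A r0 n x * fr A r1 n x)" for x
  define g where "g y = sqrt (r0 y * r1 y)" for y
  have [measurable]: "h \<in> borel_measurable borel" "g \<in> borel_measurable borel"
    unfolding h_def g_def by measurable
  have pw: "(\<integral>\<^sup>+y. ennreal (h (x - y) * g y) \<partial>lborel) \<le> ennreal (sqrt (fr A r0 (Suc n) x * fr A r1 (Suc n) x))" for x
  proof -
    have "(\<integral>\<^sup>+y. ennreal (sqrt ((fr A r0 n (x - y) * r0 y) * (fr A r1 n (x - y) * r1 y))) \<partial>lborel)
        \<le> ennreal (sqrt (fr A r0 (Suc n) x * fr A r1 (Suc n) x))"
    proof (rule CS_real)
      show "(\<integral>\<^sup>+y. ennreal (fr A r0 n (x - y) * r0 y) \<partial>lborel) = ennreal (fr A r0 (Suc n) x)"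
        using c0.fr_Suc_nn by simp
      show "(\<integral>\<^sup>+y. ennreal (fr A r1 n (x - y) * r1 y) \<partial>lborel) = ennreal (fr A r1 (Suc n) x)"
        using c1.fr_Suc_nn by simp
    qed (use c0.fr_nn c1.fr_nn c0.r_nn c1.r_nn in \<open>auto\<close>)
    moreover have "sqrt ((fr A r0 n (x - y) * r0 y) * (fr A r1 n (x - y) * r1 y)) = h (x - y) * g y" for y
      unfolding h_def g_def by (simp add: real_sqrt_mult[symmetric] ac_simps)
    ultimately show ?thesis by simp
  qed
  have "ennreal (cc ^ Suc n) = ennreal cc * ennreal (cc ^ n)"
    using cc_nn by (simp add: ennreal_mult[symmetric])
  also have "\<dots> \<le> ennreal cc * (\<integral>\<^sup>+x. ennreal (h x) \<partial>lborel)"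
    using Suc unfolding h_def by (intro mult_left_mono) auto
  also have "\<dots> = (\<integral>\<^sup>+y. ennreal (g y) * (\<integral>\<^sup>+x. ennreal (h (x - y)) \<partial>lborel) \<partial>lborel)"
    by (subst nn_integral_shift) (simp_all add: nn_integral_multc cc_nnint[symmetric] g_def)
  also have "\<dots> = (\<integral>\<^sup>+y. \<integral>\<^sup>+x. ennreal (h (x - y)) * ennreal (g y) \<partial>lborel \<partial>lborel)"
    by (simp add: nn_integral_cmult mult.commute)
  also have "\<dots> = (\<integral>\<^sup>+x. \<integral>\<^sup>+y. ennreal (h (x - y)) * ennreal (g y) \<partial>lborel \<partial>lborel)"
    by (rule lborel_pair.Fubini') measurable
  also have "\<dots> = (\<integral>\<^sup>+x. \<integral>\<^sup>+y. ennreal (h (x - y) * g y) \<partial>lborel \<partial>lborel)"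
    unfolding h_def g_def using c0.fr_nn c1.fr_nn c0.r_nn c1.r_nn by (simp add: ennreal_mult)
  also have "\<dots> \<le> (\<integral>\<^sup>+x. ennreal (sqrt (fr A r0 (Suc n) x * fr A r1 (Suc n) x)) \<partial>lborel)"
    by (intro nn_integral_mono pw)
  finally show ?case .
qed

lemma affinity_bound:
  "exp (cc - (mass r0 + mass r1) / 2) \<le> (\<integral>x. sqrt (pd A r0 x * pd A r1 x) \<partial>lborel)"
proof -
  define E where "E = exp (- (mass r0 + mass r1) / 2)"
  have E0: "0 \<le> E" unfolding E_def by simp
  have pw: "ennreal E * (\<Sum>n. ennreal (sqrt (fr A r0 n x * fr A r1 n x) / fact n)) \<le> ennreal (sqrt (pd A r0 x * pd A r1 x))" for x
  proof -
    have "(\<Sum>n. ennreal (sqrt ((fr A r0 n x / fact n) * (fr A r1 n x / fact n)))) \<le>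
          ennreal (sqrt ((\<Sum>n. fr A r0 n x / fact n) * (\<Sum>n. fr A r1 n x / fact n)))"
      by (rule series_CS) (use c0.fr_nn c1.fr_nn c0.fr_summable c1.fr_summable in auto)
    moreover have "sqrt ((fr A r0 n x / fact n) * (fr A r1 n x / fact n)) = sqrt (fr A r0 n x * fr A r1 n x) / fact n" for n
      by (simp add: real_sqrt_mult real_sqrt_divide)
    ultimately have "ennreal E * (\<Sum>n. ennreal (sqrt (fr A r0 n x * fr A r1 n x) / fact n))
       \<le> ennreal E * ennreal (sqrt ((\<Sum>n. fr A r0 n x / fact n) * (\<Sum>n. fr A r1 n x / fact n)))"
      by (intro mult_left_mono) auto
    also have "\<dots> = ennreal (sqrt (pd A r0 x * pd A r1 x))"
    proof -
      define S0 where "S0 = (\<Sum>n. fr A r0 n x / fact n)"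
      define S1 where "S1 = (\<Sum>n. fr A r1 n x / fact n)"
      have e1: "sqrt (pd A r0 x * pd A r1 x) = sqrt (exp (- mass r0) * exp (- mass r1)) * sqrt (S0 * S1)"
        unfolding pd_def S0_def S1_def by (simp add: real_sqrt_mult[symmetric] ac_simps)
      have e2: "sqrt (exp (- mass r0) * exp (- mass r1)) = E"
      proof -
        have "exp (- mass r0) * exp (- mass r1) = exp (- (mass r0 + mass r1))" by (simp add: mult_exp_exp)
        also have "\<dots> = exp (- (mass r0 + mass r1) / 2 + - (mass r0 + mass r1) / 2)" by simp
        also have "\<dots> = E\<^sup>2" unfolding E_def power2_eq_square by (rule exp_add)
        finally show ?thesis using E0 by simp
      qed
      have "0 \<le> S0" unfolding S0_def using c0.fr_summable c0.fr_nn by (intro suminf_nonneg) auto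
      moreover have "0 \<le> S1" unfolding S1_def using c1.fr_summable c1.fr_nn by (intro suminf_nonneg) auto
      ultimately have s0: "0 \<le> sqrt (S0 * S1)" by simp
      show ?thesis unfolding e1 e2 S0_def[symmetric] S1_def[symmetric]
        by (rule ennreal_mult[symmetric, OF E0 s0])
    qed
    finally show ?thesis .
  qed
  have L1: "ennreal (exp cc) = (\<Sum>n. ennreal (cc ^ n / fact n))"
    using exp_converges[of cc] cc_nn by (intro suminf_ennreal_eq[symmetric]) (auto simp: divide_inverse mult.commute)
  have L2: "(\<Sum>n. ennreal (cc ^ n / fact n)) \<le> (\<Sum>n. \<integral>\<^sup>+x. ennreal (sqrt (fr A r0 n x * fr A r1 n x) / fact n) \<partial>lborel)"
  proof (rule suminf_le)
    fix n
    have "ennreal (cc ^ n / fact n) = ennreal (cc ^ n) * ennreal (1 / fact n)"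
      using cc_nn by (simp add: ennreal_mult[symmetric])
    also have "\<dots> \<le> (\<integral>\<^sup>+x. ennreal (sqrt (fr A r0 n x * fr A r1 n x)) \<partial>lborel) * ennreal (1 / fact n)"
      by (intro mult_right_mono S_bound) auto
    also have "\<dots> = (\<integral>\<^sup>+x. ennreal (sqrt (fr A r0 n x * fr A r1 n x)) * ennreal (1 / fact n) \<partial>lborel)"
      by (rule nn_integral_multc[symmetric]) measurable
    also have "\<dots> = (\<integral>\<^sup>+x. ennreal (sqrt (fr A r0 n x * fr A r1 n x) / fact n) \<partial>lborel)"
      using c0.fr_nn c1.fr_nn by (intro nn_integral_cong) (simp add: ennreal_mult[symmetric])
    finally show "ennreal (cc ^ n / fact n) \<le> (\<integral>\<^sup>+x. ennreal (sqrt (fr A r0 n x * fr A r1 n x) / fact n) \<partial>lborel)" .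
  qed (rule summableI)+
  have L3: "(\<Sum>n. \<integral>\<^sup>+x. ennreal (sqrt (fr A r0 n x * fr A r1 n x) / fact n) \<partial>lborel) = (\<integral>\<^sup>+x. (\<Sum>n. ennreal (sqrt (fr A r0 n x * fr A r1 n x) / fact n)) \<partial>lborel)"
    by (rule nn_integral_suminf[symmetric]) measurable
  have L4: "ennreal E * (\<integral>\<^sup>+x. (\<Sum>n. ennreal (sqrt (fr A r0 n x * fr A r1 n x) / fact n)) \<partial>lborel)
      = (\<integral>\<^sup>+x. ennreal E * (\<Sum>n. ennreal (sqrt (fr A r0 n x * fr A r1 n x) / fact n)) \<partial>lborel)"
    by (rule nn_integral_cmult[symmetric]) measurable
  have L5: "(\<integral>\<^sup>+x. ennreal E * (\<Sum>n. ennreal (sqrt (fr A r0 n x * fr A r1 n x) / fact n)) \<partial>lborel)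
      \<le> (\<integral>\<^sup>+x. ennreal (sqrt (pd A r0 x * pd A r1 x)) \<partial>lborel)"
    by (intro nn_integral_mono pw)
  have int6: "integrable lborel (\<lambda>x. sqrt (pd A r0 x * pd A r1 x))"
  proof (rule Bochner_Integration.integrable_bound[of _ "\<lambda>x. pd A r0 x + pd A r1 x"])
    show "integrable lborel (\<lambda>x. pd A r0 x + pd A r1 x)" using c0.pd_int c1.pd_int by simp
    show "AE x in lborel. norm (sqrt (pd A r0 x * pd A r1 x)) \<le> norm (pd A r0 x + pd A r1 x)"
    proof (rule AE_I2)
      fix x
      have "sqrt (pd A r0 x * pd A r1 x) \<le> (pd A r0 x + pd A r1 x) / 2"
        using c0.pd_nn[of x] c1.pd_nn[of x] by (rule arith_geo_mean_sqrt)
      then show "norm (sqrt (pd A r0 x * pd A r1 x)) \<le> norm (pd A r0 x + pd A r1 x)"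
        using c0.pd_nn[of x] c1.pd_nn[of x] by auto
    qed
  qed simp
  have L6: "(\<integral>\<^sup>+x. ennreal (sqrt (pd A r0 x * pd A r1 x)) \<partial>lborel) = ennreal (\<integral>x. sqrt (pd A r0 x * pd A r1 x) \<partial>lborel)"
    by (rule nn_integral_eq_integral[OF int6]) (use c0.pd_nn c1.pd_nn in simp)
  have L0: "ennreal (exp (cc - (mass r0 + mass r1) / 2)) = ennreal E * ennreal (exp cc)"
  proof -
    have "exp (cc - (mass r0 + mass r1) / 2) = E * exp cc"
    proof -
      have "exp (cc - (mass r0 + mass r1) / 2) = exp (- (mass r0 + mass r1) / 2 + cc)"
        by (rule arg_cong[where f=exp]) linarith
      then show ?thesis unfolding E_def exp_add .
    qed
    then show ?thesis using E0 by (simp add: ennreal_mult)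
  qed
  have "ennreal (exp (cc - (mass r0 + mass r1) / 2)) \<le> ennreal (\<integral>x. sqrt (pd A r0 x * pd A r1 x) \<partial>lborel)"
  proof -
    have "ennreal E * ennreal (exp cc) \<le> ennreal E * (\<integral>\<^sup>+x. (\<Sum>n. ennreal (sqrt (fr A r0 n x * fr A r1 n x) / fact n)) \<partial>lborel)"
      unfolding L1 L3[symmetric] by (rule mult_left_mono[OF L2]) simp
    also have "\<dots> \<le> (\<integral>\<^sup>+x. ennreal (sqrt (pd A r0 x * pd A r1 x)) \<partial>lborel)"
      unfolding L4 by (rule L5)
    finally show ?thesis unfolding L0 L6 .
  qed
  moreover have "0 \<le> (\<integral>x. sqrt (pd A r0 x * pd A r1 x) \<partial>lborel)"
    by (rule Bochner_Integration.integral_nonneg) (use c0.pd_nn c1.pd_nn in simp)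
  ultimately show ?thesis by (simp add: ennreal_le_iff)
qed

end



lemma cexp_set_integrable:
  fixes z :: complex assumes z: "0 < Re z"
  shows "set_integrable lborel {0<..} (\<lambda>x::real. exp (- (z * of_real x)))"
proof -
  define a where "a = Re z"
  have a: "0 < a" using z a_def by simp
  have ri: "set_integrable lborel (einterval 0 \<infinity>) (\<lambda>x. exp (- (x * a)))"
  proof (rule interval_integral_FTC_nonneg(1)[where F="\<lambda>x. - exp (- (x * a)) / a" and A="-1/a" and B=0])
    show "\<And>x. 0 < ereal x \<Longrightarrow> ereal x < \<infinity> \<Longrightarrow> ((\<lambda>x. - exp (- (x * a)) / a) has_real_derivative exp (- (x * a))) (at x)"
      using a by (auto intro!: derivative_eq_intros)
    show "(((\<lambda>x. - exp (- (x * a)) / a) \<circ> real_of_ereal) \<longlongrightarrow> -1/a) (at_right 0)"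
      using a by (auto simp: zero_ereal_def ereal_tendsto_simps intro!: tendsto_eq_intros)
    have *: "((\<lambda>t. exp (- (t * a))) \<longlongrightarrow> 0) at_top"
      using a by (auto intro!: exp_at_bot[THEN filterlim_compose] filterlim_tendsto_pos_mult_at_top filterlim_ident
             simp: filterlim_uminus_at_bot mult.commute[of _ a])
    show "(((\<lambda>x. - exp (- (x * a)) / a) \<circ> real_of_ereal) \<longlongrightarrow> 0) (at_left \<infinity>)"
      using a unfolding ereal_tendsto_simps
      by (intro filterlim_compose[OF _ *]) (auto intro!: tendsto_eq_intros filterlim_ident)
  qed auto
  have "einterval 0 \<infinity> = {0::real<..}" by (auto simp: einterval_iff zero_ereal_def)
  then have ri': "set_integrable lborel {0<..} (\<lambda>x. exp (- (x * a)))" using ri by simp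
  show ?thesis
    unfolding set_integrable_def
  proof (rule Bochner_Integration.integrable_bound)
    show "integrable lborel (\<lambda>x. indicat_real {0<..} x *\<^sub>R exp (- (x * a)))"
      using ri' unfolding set_integrable_def .
    show "AE x in lborel. norm (indicat_real {0<..} x *\<^sub>R exp (- (z * complex_of_real x))) \<le> norm (indicat_real {0<..} x *\<^sub>R exp (- (x * a)))"
      by (intro AE_I2) (auto simp: indicator_def norm_exp_eq_Re a_def mult.commute)
  qed simp
qed

lemma cexp_integral:
  fixes z :: complex assumes z: "0 < Re z"
  shows "(LBINT x:{0<..}. exp (- (z * of_real x))) = 1 / z"
proof -
  have zn: "z \<noteq> 0" using z by auto
  have "(LBINT x=0..\<infinity>. exp (- (z * of_real x))) = 0 - (- 1 / z)"
  proof (rule interval_integral_FTC_integrable[where F="\<lambda>x. - exp (- (z * of_real x)) / z"])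
    show "((\<lambda>x. - exp (- (z * of_real x)) / z) has_vector_derivative exp (- (z * of_real x))) (at x)" for x
      using zn by (auto intro!: derivative_eq_intros has_vector_derivative_real_field)
    show "isCont (\<lambda>x::real. exp (- (z * of_real x))) x" for x by (intro continuous_intros)
    have "einterval 0 \<infinity> = {0::real<..}" by (auto simp: einterval_iff zero_ereal_def)
    then show "set_integrable lborel (einterval 0 \<infinity>) (\<lambda>x. exp (- (z * of_real x)))"
      using cexp_set_integrable[OF z] by simp
    show "(((\<lambda>x. - exp (- (z * of_real x)) / z) \<circ> real_of_ereal) \<longlongrightarrow> - 1 / z) (at_right 0)"
      using zn by (auto simp: zero_ereal_def ereal_tendsto_simps intro!: tendsto_eq_intros)
    have "((\<lambda>t::real. exp (- (z * of_real t))) \<longlongrightarrow> 0) at_top"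
    proof (rule tendsto_norm_zero_cancel)
      have "((\<lambda>t. exp (- (t * Re z))) \<longlongrightarrow> 0) at_top"
        using z by (auto intro!: exp_at_bot[THEN filterlim_compose] filterlim_tendsto_pos_mult_at_top filterlim_ident
             simp: filterlim_uminus_at_bot mult.commute[of _ "Re z"])
      then show "((\<lambda>t::real. norm (exp (- (z * of_real t)))) \<longlongrightarrow> 0) at_top"
        by (simp add: norm_exp_eq_Re mult.commute)
    qed
    then have "((\<lambda>t::real. - exp (- (z * of_real t)) / z) \<longlongrightarrow> - 0 / z) at_top"
      by (intro tendsto_divide tendsto_minus tendsto_const) (use zn in auto)
    then show "(((\<lambda>x. - exp (- (z * of_real x)) / z) \<circ> real_of_ereal) \<longlongrightarrow> 0) (at_left \<infinity>)"
      unfolding ereal_tendsto_simps by simp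
  qed auto
  then show ?thesis by (simp add: interval_integral_to_infinity_eq zero_ereal_def)
qed



definition khat :: "real \<Rightarrow> real \<Rightarrow> complex" where
  "khat A u = complex_of_real A / (complex_of_real A - \<i> * complex_of_real u)"

definition rhat :: "(real \<Rightarrow> real) \<Rightarrow> real \<Rightarrow> complex" where
  "rhat r u = (\<integral>x. r x *\<^sub>R iexp (u * x) \<partial>lborel)"

lemma kchar:
  assumes A: "0 < A"
  shows "(\<integral>x. exponential_density A x *\<^sub>R iexp (u * x) \<partial>lborel) = khat A u"
proof -
  define z where "z = complex_of_real A - \<i> * complex_of_real u"
  have z: "0 < Re z" using A by (simp add: z_def)
  have "(\<integral>x. exponential_density A x *\<^sub>R iexp (u * x) \<partial>lborel)
      = (\<integral>x. complex_of_real A * (indicat_real {0<..} x *\<^sub>R exp (- (z * of_real x))) \<partial>lborel)"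
  proof (rule integral_cong_AE)
    show "AE x in lborel. exponential_density A x *\<^sub>R iexp (u * x) = complex_of_real A * (indicat_real {0<..} x *\<^sub>R exp (- (z * of_real x)))"
      using AE_lborel_singleton[of 0]
    proof eventually_elim
      case (elim x)
      show ?case
      proof (cases "0 < x")
        case True
        have "exp (- (z * of_real x)) = exp (complex_of_real (- x * A)) * iexp (u * x)"
          by (simp add: z_def exp_add[symmetric] algebra_simps)
        then show ?thesis using True by (simp add: exponential_density_def scaleR_conv_of_real mult.commute flip: exp_of_real)
      next
        case False then show ?thesis using elim by (simp add: exponential_density_def)
      qed
    qed
  qed simp_all
  also have "\<dots> = complex_of_real A * (LBINT x:{0<..}. exp (- (z * of_real x)))"
    unfolding set_lebesgue_integral_def by (rule integral_mult_right_zero)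
  also have "\<dots> = khat A u" using cexp_integral[OF z] by (simp add: khat_def z_def)
  finally show ?thesis .
qed

context cpr begin

lemma fr_char: "(\<integral>x. fr A r n x *\<^sub>R iexp (u * x) \<partial>lborel) = khat A u * rhat r u ^ n"
proof (induction n)
  case 0
  then show ?case using kchar[OF A_pos] by simp
next
  case (Suc n)
  define f where "f x y = (fr A r n (x - y) * r y) *\<^sub>R iexp (u * x)" for x y
  have [measurable]: "(\<lambda>(x, y). f x y) \<in> borel_measurable (lborel \<Otimes>\<^sub>M lborel)"
    unfolding f_def by measurable
  have nf: "norm (f x y) = fr A r n (x - y) * r y" for x y
    unfolding f_def using fr_nn r_nn by (simp add: norm_exp_eq_Re)
  have prodint: "integrable (lborel \<Otimes>\<^sub>M lborel) (\<lambda>(x, y). f x y)"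
  proof (rule lborel_pair.Fubini_integrable)
    show "integrable lborel (\<lambda>x. \<integral>y. norm (case (x, y) of (x, y) \<Rightarrow> f x y) \<partial>lborel)"
      using fr_int[of "Suc n"] by (simp add: nf)
    show "AE x in lborel. integrable lborel (\<lambda>y. case (x, y) of (x, y) \<Rightarrow> f x y)"
    proof (rule AE_I2)
      fix x
      show "integrable lborel (\<lambda>y. case (x, y) of (x, y) \<Rightarrow> f x y)"
        unfolding f_def using fr_conv_int[of n x] by simp
    qed
  qed simp
  have "(\<integral>x. fr A r (Suc n) x *\<^sub>R iexp (u * x) \<partial>lborel) = (\<integral>x. \<integral>y. f x y \<partial>lborel \<partial>lborel)"
  proof (rule Bochner_Integration.integral_cong[OF refl])
    fix x
    show "fr A r (Suc n) x *\<^sub>R iexp (u * x) = (\<integral>y. f x y \<partial>lborel)"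
      unfolding f_def by (simp add: fr_conv_int)
  qed
  also have "\<dots> = (\<integral>y. \<integral>x. f x y \<partial>lborel \<partial>lborel)"
    by (rule lborel_pair.Fubini_integral[symmetric, OF prodint])
  also have "\<dots> = (\<integral>y. (r y *\<^sub>R iexp (u * y)) * (\<integral>x. fr A r n (x - y) *\<^sub>R iexp (u * (x - y)) \<partial>lborel) \<partial>lborel)"
  proof (rule Bochner_Integration.integral_cong[OF refl])
    fix y
    have "(\<integral>x. f x y \<partial>lborel) = (\<integral>x. (r y *\<^sub>R iexp (u * y)) * (fr A r n (x - y) *\<^sub>R iexp (u * (x - y))) \<partial>lborel)"
    proof (rule Bochner_Integration.integral_cong[OF refl])
      fix x
      have "iexp (u * x) = iexp (u * y) * iexp (u * (x - y))"
        by (simp add: exp_add[symmetric] algebra_simps)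
      then show "f x y = (r y *\<^sub>R iexp (u * y)) * (fr A r n (x - y) *\<^sub>R iexp (u * (x - y)))"
        unfolding f_def by (simp add: scaleR_conv_of_real)
    qed
    also have "\<dots> = (r y *\<^sub>R iexp (u * y)) * (\<integral>x. fr A r n (x - y) *\<^sub>R iexp (u * (x - y)) \<partial>lborel)"
      by (rule integral_mult_right_zero)
    finally show "(\<integral>x. f x y \<partial>lborel) = (r y *\<^sub>R iexp (u * y)) * (\<integral>x. fr A r n (x - y) *\<^sub>R iexp (u * (x - y)) \<partial>lborel)" .
  qed
  also have "\<dots> = (\<integral>y. (r y *\<^sub>R iexp (u * y)) * (khat A u * rhat r u ^ n) \<partial>lborel)"
  proof (rule Bochner_Integration.integral_cong[OF refl])
    fix y
    have "(\<integral>x. fr A r n x *\<^sub>R iexp (u * x) \<partial>lborel) = (\<integral>x. fr A r n (- y + x) *\<^sub>R iexp (u * (- y + x)) \<partial>lborel)"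
      using lborel_integral_real_affine[of 1 "\<lambda>x. fr A r n x *\<^sub>R iexp (u * x)" "-y"] by simp
    then show "(r y *\<^sub>R iexp (u * y)) * (\<integral>x. fr A r n (x - y) *\<^sub>R iexp (u * (x - y)) \<partial>lborel) = (r y *\<^sub>R iexp (u * y)) * (khat A u * rhat r u ^ n)"
      using Suc by simp
  qed
  also have "\<dots> = rhat r u * (khat A u * rhat r u ^ n)"
    unfolding rhat_def by (rule integral_mult_left_zero)
  finally show ?case by (simp add: ac_simps)
qed

end



context cpr begin

lemma pd_real_dist: "real_distribution (density lborel (pd A r))"
proof -
  have "prob_space (density lborel (pd A r))"
    by (rule prob_spaceI) (simp add: emeasure_density pd_nnint)
  then show ?thesis unfolding real_distribution_def real_distribution_axioms_def by simp
qed

lemma pd_char: "char (density lborel (pd A r)) u = khat A u * exp (rhat r u - complex_of_real (mass r))"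
proof -
  define f where "f n x = (fr A r n x / fact n) *\<^sub>R iexp (u * x)" for n x
  have nf: "norm (f n x) = fr A r n x / fact n" for n x
    unfolding f_def using fr_nn[of n x] by (simp add: norm_exp_eq_Re)
  have fint: "integrable lborel (f n)" for n
  proof (rule Bochner_Integration.integrable_bound[of _ "\<lambda>x. fr A r n x / fact n"])
    show "integrable lborel (\<lambda>x. fr A r n x / fact n)" using fr_int[of n] by simp
    show "AE x in lborel. norm (f n x) \<le> norm (fr A r n x / fact n)"
      using fr_nn by (intro AE_I2) (simp add: nf)
  qed (unfold f_def, measurable)
  have s1: "AE x in lborel. summable (\<lambda>n. norm (f n x))"
    unfolding nf using fr_summable by simp
  have intnf: "(\<integral>x. norm (f n x) \<partial>lborel) = mass r ^ n / fact n" for n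
    unfolding nf using fr_integral by simp
  have s2: "summable (\<lambda>n. \<integral>x. norm (f n x) \<partial>lborel)"
    unfolding intnf using exp_converges[of "mass r"] by (simp add: sums_iff divide_inverse mult.commute)
  have "char (density lborel (pd A r)) u = (\<integral>x. pd A r x *\<^sub>R iexp (u * x) \<partial>lborel)"
    unfolding char_def using pd_nn by (subst integral_density) auto
  also have "\<dots> = (\<integral>x. exp (- mass r) *\<^sub>R (\<Sum>n. f n x) \<partial>lborel)"
  proof (rule Bochner_Integration.integral_cong[OF refl])
    fix x
    have "(\<Sum>n. f n x) = (\<Sum>n. fr A r n x / fact n) *\<^sub>R iexp (u * x)"
      unfolding f_def by (rule suminf_scaleR_left[symmetric]) (rule fr_summable)
    then show "pd A r x *\<^sub>R iexp (u * x) = exp (- mass r) *\<^sub>R (\<Sum>n. f n x)"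
      unfolding pd_def by simp
  qed
  also have "\<dots> = exp (- mass r) *\<^sub>R (\<Sum>n. integral\<^sup>L lborel (f n))"
    using integral_suminf[OF fint s1 s2] by simp
  also have "(\<lambda>n. integral\<^sup>L lborel (f n)) = (\<lambda>n. khat A u * (rhat r u ^ n /\<^sub>R fact n))"
  proof
    fix n
    have "integral\<^sup>L lborel (f n) = (\<integral>x. (1 / fact n) *\<^sub>R (fr A r n x *\<^sub>R iexp (u * x)) \<partial>lborel)"
      unfolding f_def by simp
    also have "\<dots> = (1 / fact n) *\<^sub>R (\<integral>x. fr A r n x *\<^sub>R iexp (u * x) \<partial>lborel)"
      by (rule integral_scaleR_right)
    also have "\<dots> = (1 / fact n) *\<^sub>R (khat A u * rhat r u ^ n)"
      by (simp only: fr_char)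
    finally show "integral\<^sup>L lborel (f n) = khat A u * (rhat r u ^ n /\<^sub>R fact n)"
      by (simp add: scaleR_conv_of_real divide_inverse ac_simps)
  qed
  also have "(\<Sum>n. khat A u * (rhat r u ^ n /\<^sub>R fact n)) = khat A u * exp (rhat r u)"
    using exp_converges[of "rhat r u"] by (metis sums_iff suminf_mult)
  also have "exp (- mass r) *\<^sub>R (khat A u * exp (rhat r u)) = khat A u * exp (rhat r u - complex_of_real (mass r))"
    by (simp add: scaleR_conv_of_real exp_diff exp_of_real[symmetric] exp_minus divide_inverse ac_simps)
  finally show ?thesis .
qed

end



definition gd :: "real \<Rightarrow> real \<Rightarrow> real" where
  "gd A x = (if 0 < x then exp (- (A * x)) / x else 0)"

lemma gd_meas[measurable]: "gd A \<in> borel_measurable borel"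
  unfolding gd_def by measurable

lemma iexp_minus_one_le: "norm (iexp t - 1) \<le> \<bar>t\<bar>"
  using iexp_approx1[of t 0] by simp

lemma frullani_inner:
  assumes x: "0 < x"
  shows "(iexp (u * x) - 1) * complex_of_real (gd A x)
       = (\<integral>t. indicator {0..1} t *\<^sub>R (\<i> * of_real u * exp (- ((of_real A - \<i> * of_real u * of_real t) * of_real x))) \<partial>lborel)"
proof -
  have "(LBINT t=ereal 0..ereal 1. \<i> * of_real u * of_real x * exp (\<i> * of_real u * of_real t * of_real x)) = exp (\<i> * of_real u * of_real 1 * of_real x) - exp (\<i> * of_real u * of_real 0 * of_real x)"
  proof (rule interval_integral_FTC_finite[where F="\<lambda>t. exp (\<i> * of_real u * of_real t * of_real x)"])
    show "continuous_on {min 0 1..max 0 1} (\<lambda>t. \<i> * of_real u * of_real x * exp (\<i> * of_real u * of_real t * of_real x))"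
      by (intro continuous_intros)
    show "((\<lambda>t. exp (\<i> * of_real u * of_real t * of_real x)) has_vector_derivative \<i> * of_real u * of_real x * exp (\<i> * of_real u * of_real t * of_real x)) (at t within {min 0 1..max 0 1})" for t
      by (rule has_vector_derivative_at_within)
         (auto intro!: derivative_eq_intros has_vector_derivative_real_field simp: ac_simps)
  qed
  then have e1: "(LBINT t:{0..1}. \<i> * of_real u * of_real x * exp (\<i> * of_real u * of_real t * of_real x)) = iexp (u * x) - 1"
    using interval_integral_Icc[of 0 1 "\<lambda>t. \<i> * of_real u * of_real x * exp (\<i> * of_real u * of_real t * of_real x)"]
    by (simp add: ac_simps)
  have "(iexp (u * x) - 1) * complex_of_real (gd A x) = complex_of_real (exp (- (A * x)) / x) * (iexp (u * x) - 1)"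
    using x by (simp add: gd_def mult.commute)
  also have "\<dots> = complex_of_real (exp (- (A * x)) / x) * (LBINT t:{0..1}. \<i> * of_real u * of_real x * exp (\<i> * of_real u * of_real t * of_real x))"
    by (simp only: e1)
  also have "\<dots> = (\<integral>t. complex_of_real (exp (- (A * x)) / x) * (indicator {0..1} t *\<^sub>R (\<i> * of_real u * of_real x * exp (\<i> * of_real u * of_real t * of_real x))) \<partial>lborel)"
    unfolding set_lebesgue_integral_def by (rule integral_mult_right_zero[symmetric])
  also have "\<dots> = (\<integral>t. indicator {0..1} t *\<^sub>R (\<i> * of_real u * exp (- ((of_real A - \<i> * of_real u * of_real t) * of_real x))) \<partial>lborel)"
  proof (rule Bochner_Integration.integral_cong[OF refl])
    fix t
    have "exp (- ((of_real A - \<i> * of_real u * of_real t) * of_real x)) = complex_of_real (exp (- (A * x))) * exp (\<i> * of_real u * of_real t * of_real x)"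
      by (simp add: exp_of_real[symmetric] exp_add[symmetric] algebra_simps)
    then show "complex_of_real (exp (- (A * x)) / x) * (indicator {0..1} t *\<^sub>R (\<i> * of_real u * of_real x * exp (\<i> * of_real u * of_real t * of_real x)))
       = indicator {0..1} t *\<^sub>R (\<i> * of_real u * exp (- ((of_real A - \<i> * of_real u * of_real t) * of_real x)))"
      using x by (simp add: indicator_def field_simps)
  qed
  finally show ?thesis .
qed

lemma expA_integrable:
  fixes A :: real
  assumes A: "0 < A"
  shows "integrable lborel (\<lambda>x. indicator {0<..} x * exp (- (A * x)))"
proof -
  have "integrable lborel (\<lambda>x. norm (indicator {0<..} x *\<^sub>R exp (- (complex_of_real A * of_real x))))"
    using cexp_set_integrable[of "complex_of_real A"] A unfolding set_integrable_def
    by (intro integrable_norm) simp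
  moreover have "norm (indicator {0<..} x *\<^sub>R exp (- (complex_of_real A * of_real x))) = indicator {0<..} x * exp (- (A * x))" for x :: real
    by (simp add: indicator_def norm_exp_eq_Re)
  ultimately show ?thesis by simp
qed

lemma frullani:
  fixes A u :: real
  assumes A: "0 < A"
  shows "exp (\<integral>x. indicator {0<..} x *\<^sub>R ((iexp (u * x) - 1) * of_real (gd A x)) \<partial>lborel) = khat A u"
proof -
  define w where "w t = complex_of_real A - \<i> * of_real u * of_real t" for t :: real
  have Rew: "Re (w t) = A" for t unfolding w_def by simp
  have wn: "w t \<noteq> 0" for t using Rew[of t] A by auto
  define h where "h x t = indicator {0<..} x *\<^sub>R (indicator {0..1} t *\<^sub>R (\<i> * of_real u * exp (- (w t * of_real x))))" for x t :: real
  have [measurable]: "(\<lambda>(x, t). h x t) \<in> borel_measurable (lborel \<Otimes>\<^sub>M lborel)"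
    unfolding h_def w_def by measurable
  have nh: "norm (h x t) = indicator {0<..} x * (indicator {0..1} t * (\<bar>u\<bar> * exp (- (A * x))))" for x t
    unfolding h_def by (simp add: norm_mult norm_exp_eq_Re Rew indicator_def)
  have int01: "integrable lborel (\<lambda>t::real. indicator {0..1} t :: real)"
    by (rule integrable_real_indicator) auto
  have prodint: "integrable (lborel \<Otimes>\<^sub>M lborel) (\<lambda>(x, t). h x t)"
  proof (rule lborel_pair.Fubini_integrable)
    have "(\<lambda>x. \<integral>t. norm (case (x, t) of (x, t) \<Rightarrow> h x t) \<partial>lborel) = (\<lambda>x. \<bar>u\<bar> * (indicator {0<..} x * exp (- (A * x))))"
    proof
      fix x
      have "(\<integral>t. norm (h x t) \<partial>lborel) = (\<integral>t. (indicator {0<..} x * \<bar>u\<bar> * exp (- (A * x))) * indicator {0..1::real} t \<partial>lborel)"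
        unfolding nh by (simp add: ac_simps)
      also have "\<dots> = indicator {0<..} x * \<bar>u\<bar> * exp (- (A * x))"
        by (simp add: measure_lborel_Icc)
      finally show "(\<integral>t. norm (case (x, t) of (x, t) \<Rightarrow> h x t) \<partial>lborel) = \<bar>u\<bar> * (indicator {0<..} x * exp (- (A * x)))"
        by simp
    qed
    then show "integrable lborel (\<lambda>x. \<integral>t. norm (case (x, t) of (x, t) \<Rightarrow> h x t) \<partial>lborel)"
      using expA_integrable[OF A] by simp
    show "AE x in lborel. integrable lborel (\<lambda>t. case (x, t) of (x, t) \<Rightarrow> h x t)"
    proof (rule AE_I2)
      fix x
      show "integrable lborel (\<lambda>t. case (x, t) of (x, t) \<Rightarrow> h x t)"
      proof (rule Bochner_Integration.integrable_bound[of _ "\<lambda>t. (indicator {0<..} x * \<bar>u\<bar> * exp (- (A * x))) * indicator {0..1::real} t"])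
        show "integrable lborel (\<lambda>t. (indicator {0<..} x * \<bar>u\<bar> * exp (- (A * x))) * indicator {0..1::real} t)"
          using int01 by simp
        show "AE t in lborel. norm (case (x, t) of (x, t) \<Rightarrow> h x t) \<le> norm ((indicator {0<..} x * \<bar>u\<bar> * exp (- (A * x))) * indicator {0..1::real} t)"
          by (intro AE_I2) (simp add: nh indicator_def)
      qed (simp only: prod.case, unfold h_def w_def, measurable)
    qed
  qed simp
  have "(\<integral>x. indicator {0<..} x *\<^sub>R ((iexp (u * x) - 1) * of_real (gd A x)) \<partial>lborel) = (\<integral>x. \<integral>t. h x t \<partial>lborel \<partial>lborel)"
  proof (rule Bochner_Integration.integral_cong[OF refl])
    fix x
    show "indicator {0<..} x *\<^sub>R ((iexp (u * x) - 1) * of_real (gd A x)) = (\<integral>t. h x t \<partial>lborel)"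
    proof (cases "0 < x")
      case True
      then show ?thesis unfolding h_def w_def using frullani_inner[OF True, of u A] by simp
    next
      case False then show ?thesis by (simp add: h_def)
    qed
  qed
  also have "\<dots> = (\<integral>t. \<integral>x. h x t \<partial>lborel \<partial>lborel)"
    by (rule lborel_pair.Fubini_integral[symmetric, OF prodint])
  also have "\<dots> = (\<integral>t. indicator {0..1} t *\<^sub>R (\<i> * of_real u / w t) \<partial>lborel)"
  proof (rule Bochner_Integration.integral_cong[OF refl])
    fix t
    have z: "0 < Re (w t)" using Rew A by simp
    have "(\<integral>x. h x t \<partial>lborel) = (\<integral>x. (indicator {0..1} t *\<^sub>R (\<i> * of_real u)) * (indicator {0<..} x *\<^sub>R exp (- (w t * of_real x))) \<partial>lborel)"
      unfolding h_def by (rule Bochner_Integration.integral_cong) (simp_all add: indicator_def)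
    also have "\<dots> = (indicator {0..1} t *\<^sub>R (\<i> * of_real u)) * (LBINT x:{0<..}. exp (- (w t * of_real x)))"
      unfolding set_lebesgue_integral_def by (rule integral_mult_right_zero)
    also have "\<dots> = indicator {0..1} t *\<^sub>R (\<i> * of_real u / w t)"
      using cexp_integral[OF z] by (simp add: scaleR_conv_of_real)
    finally show "(\<integral>x. h x t \<partial>lborel) = indicator {0..1} t *\<^sub>R (\<i> * of_real u / w t)" .
  qed
  also have "\<dots> = (LBINT t=ereal 0..ereal 1. \<i> * of_real u / w t)"
    using interval_integral_Icc[of 0 1 "\<lambda>t. \<i> * of_real u / w t"] by (simp add: set_lebesgue_integral_def)
  also have "\<dots> = (- Ln (w 1)) - (- Ln (w 0))"
  proof (rule interval_integral_FTC_finite)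
    show "continuous_on {min 0 1..max 0 1} (\<lambda>t. \<i> * of_real u / w t)"
      unfolding w_def using wn unfolding w_def by (intro continuous_intros) auto
    fix t :: real
    have nr: "w t \<notin> \<real>\<^sub>\<le>\<^sub>0" using Rew[of t] A by (auto simp: complex_nonpos_Reals_iff)
    have "((\<lambda>t::complex. - Ln (complex_of_real A - \<i> * of_real u * t)) has_field_derivative \<i> * of_real u / w t) (at (of_real t))"
      using nr unfolding w_def
      by (auto intro!: derivative_eq_intros simp: field_simps)
    then have "((\<lambda>t::real. - Ln (w t)) has_vector_derivative \<i> * of_real u / w t) (at t)"
      unfolding w_def by (rule has_vector_derivative_real_field)
    then show "((\<lambda>t. - Ln (w t)) has_vector_derivative \<i> * of_real u / w t) (at t within {min 0 1..max 0 1})"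
      by (rule has_vector_derivative_at_within)
  qed
  finally have e: "(\<integral>x. indicator {0<..} x *\<^sub>R ((iexp (u * x) - 1) * of_real (gd A x)) \<partial>lborel) = Ln (w 0) - Ln (w 1)"
    by simp
  have "exp (Ln (w 0) - Ln (w 1)) = w 0 / w 1"
    using wn[of 0] wn[of 1] by (simp add: exp_diff)
  then show ?thesis unfolding e khat_def by (simp add: w_def)
qed



context cpr begin

lemma levy_exponent_split:
  assumes rz: "\<And>x. x \<le> 0 \<Longrightarrow> r x = 0"
    and v[measurable]: "v \<in> borel_measurable borel"
    and vx: "\<And>x. 0 < x \<Longrightarrow> v x = gd A x + r x"
  shows "exp (levy_exponent v u) = khat A u * exp (rhat r u - complex_of_real (mass r))"
proof -
  define \<psi> where "\<psi> = (\<integral>x. indicator {0<..} x *\<^sub>R ((iexp (u * x) - 1) * of_real (gd A x)) \<partial>lborel)"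
  have int01: "integrable lborel (\<lambda>t::real. indicator {0..1} t :: real)"
    by (rule integrable_real_indicator) auto
  have xv_int: "integrable lborel (\<lambda>x. indicator {0<..1} x * (x * v x))"
  proof (rule Bochner_Integration.integrable_bound[of _ "\<lambda>x. indicator {0..1::real} x + r x"])
    show "integrable lborel (\<lambda>x. indicator {0..1::real} x + r x)" using int01 r_int by simp
    show "AE x in lborel. norm (indicator {0<..1} x * (x * v x)) \<le> norm (indicator {0..1::real} x + r x)"
    proof (rule AE_I2)
      fix x :: real
      show "norm (indicator {0<..1} x * (x * v x)) \<le> norm (indicator {0..1::real} x + r x)"
      proof (cases "0 < x \<and> x \<le> 1")
        case True
        then have "x * v x = exp (- (A * x)) + x * r x" using vx[of x] by (simp add: gd_def field_simps)
        then have n1: "norm (indicator {0<..1} x * (x * v x)) = exp (- (A * x)) + x * r x"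
          using True r_nn[of x] by (simp add: indicator_def)
        have n2: "norm (indicator {0..1::real} x + r x) = 1 + r x"
          using True r_nn[of x] by (simp add: indicator_def)
        have "exp (- (A * x)) \<le> 1" using True A_pos by simp
        moreover have "x * r x \<le> r x" using True r_nn[of x] by (simp add: mult_left_le_one_le)
        ultimately show ?thesis unfolding n1 n2 by linarith
      next
        case False then show ?thesis using r_nn[of x] by (auto simp: indicator_def)
      qed
    qed
  qed simp
  have t1_int: "integrable lborel (\<lambda>x. indicator {0<..} x *\<^sub>R ((iexp (u * x) - 1) * of_real (gd A x)))"
  proof (rule Bochner_Integration.integrable_bound[of _ "\<lambda>x. \<bar>u\<bar> * (indicator {0<..} x * exp (- (A * x)))"])
    show "integrable lborel (\<lambda>x. \<bar>u\<bar> * (indicator {0<..} x * exp (- (A * x))))"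
      using expA_integrable[OF A_pos] by simp
    show "AE x in lborel. norm (indicator {0<..} x *\<^sub>R ((iexp (u * x) - 1) * of_real (gd A x))) \<le> norm (\<bar>u\<bar> * (indicator {0<..} x * exp (- (A * x))))"
    proof (rule AE_I2)
      fix x :: real
      show "norm (indicator {0<..} x *\<^sub>R ((iexp (u * x) - 1) * of_real (gd A x))) \<le> norm (\<bar>u\<bar> * (indicator {0<..} x * exp (- (A * x))))"
      proof (cases "0 < x")
        case True
        have "norm ((iexp (u * x) - 1) * of_real (gd A x)) = norm (iexp (u * x) - 1) * (exp (- (A * x)) / x)"
          using True by (simp add: norm_mult norm_divide gd_def)
        also have "\<dots> \<le> (\<bar>u\<bar> * x) * (exp (- (A * x)) / x)"
          using iexp_minus_one_le[of "u * x"] True by (intro mult_right_mono) (auto simp: abs_mult)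
        also have "\<dots> = \<bar>u\<bar> * exp (- (A * x))" using True by simp
        finally show ?thesis using True by (simp add: indicator_def)
      next
        case False then show ?thesis by (simp add: indicator_def)
      qed
    qed
  qed (unfold gd_def, measurable)
  have t2_int: "integrable lborel (\<lambda>x. (iexp (u * x) - 1) * of_real (r x))"
  proof (rule Bochner_Integration.integrable_bound[of _ "\<lambda>x. 2 * r x"])
    show "integrable lborel (\<lambda>x. 2 * r x)" using r_int by simp
    show "AE x in lborel. norm ((iexp (u * x) - 1) * of_real (r x)) \<le> norm (2 * r x)"
    proof (rule AE_I2)
      fix x
      have "norm (iexp (u * x) - 1) \<le> norm (iexp (u * x)) + norm (1::complex)" by (rule norm_triangle_ineq4)
      then have "norm (iexp (u * x) - 1) \<le> 2" by (simp add: norm_exp_eq_Re)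
      then show "norm ((iexp (u * x) - 1) * of_real (r x)) \<le> norm (2 * r x)"
        using r_nn[of x] by (simp add: norm_mult mult_right_mono)
    qed
  qed simp
  have t3_int: "integrable lborel (\<lambda>x. \<i> * of_real u * of_real (indicator {0<..1} x * (x * v x)))"
    using xv_int by (intro integrable_mult_right integrable_of_real) 
  have rint: "integrable lborel (\<lambda>x. r x *\<^sub>R iexp (u * x))"
  proof (rule Bochner_Integration.integrable_bound[of _ "r"])
    show "AE x in lborel. norm (r x *\<^sub>R iexp (u * x)) \<le> norm (r x)"
      by (intro AE_I2) (simp add: norm_exp_eq_Re)
  qed (use r_int in simp_all)
  have "set_lebesgue_integral lborel {0<..} (\<lambda>x. (iexp (u * x) - 1 - \<i> * complex_of_real (u * x) * indicator {..1} x) * complex_of_real (v x))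
     = (\<integral>x. indicator {0<..} x *\<^sub>R ((iexp (u * x) - 1) * of_real (gd A x)) + (iexp (u * x) - 1) * of_real (r x)
            - \<i> * of_real u * of_real (indicator {0<..1} x * (x * v x)) \<partial>lborel)"
    unfolding set_lebesgue_integral_def
  proof (rule Bochner_Integration.integral_cong[OF refl])
    fix x :: real
    show "indicator {0<..} x *\<^sub>R ((iexp (u * x) - 1 - \<i> * complex_of_real (u * x) * indicator {..1} x) * complex_of_real (v x))
      = indicator {0<..} x *\<^sub>R ((iexp (u * x) - 1) * of_real (gd A x)) + (iexp (u * x) - 1) * of_real (r x)
            - \<i> * of_real u * of_real (indicator {0<..1} x * (x * v x))"
    proof (cases "0 < x")
      case True
      then show ?thesis using vx[OF True] by (simp add: indicator_def algebra_simps)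
    next
      case False then show ?thesis using rz[of x] by (simp add: indicator_def)
    qed
  qed
  also have "\<dots> = \<psi> + (rhat r u - of_real (mass r)) - \<i> * of_real u * of_real (levy_drift v)"
  proof -
    have "(\<integral>x. (iexp (u * x) - 1) * of_real (r x) \<partial>lborel) = (\<integral>x. r x *\<^sub>R iexp (u * x) - of_real (r x) \<partial>lborel)"
      by (rule Bochner_Integration.integral_cong) (simp_all add: scaleR_conv_of_real algebra_simps)
    also have "\<dots> = rhat r u - of_real (mass r)"
      unfolding rhat_def mass_def using rint r_int by (subst Bochner_Integration.integral_diff) auto
    finally have a: "(\<integral>x. (iexp (u * x) - 1) * of_real (r x) \<partial>lborel) = rhat r u - of_real (mass r)" .
    have b: "(\<integral>x. \<i> * of_real u * of_real (indicator {0<..1} x * (x * v x)) \<partial>lborel) = \<i> * of_real u * of_real (levy_drift v)"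
    proof -
      have "(\<integral>x. \<i> * of_real u * of_real (indicator {0<..1} x * (x * v x)) \<partial>lborel)
          = \<i> * of_real u * (\<integral>x. complex_of_real (indicator {0<..1} x * (x * v x)) \<partial>lborel)"
        by (rule integral_mult_right_zero)
      also have "(\<integral>x. complex_of_real (indicator {0<..1} x * (x * v x)) \<partial>lborel) = of_real (levy_drift v)"
        unfolding integral_complex_of_real levy_drift_def set_lebesgue_integral_def by simp
      finally show ?thesis .
    qed
    show ?thesis
      using t1_int t2_int t3_int a b unfolding \<psi>_def
      by (subst Bochner_Integration.integral_diff) (auto intro!: Bochner_Integration.integrable_add)
  qed
  finally have "levy_exponent v u = \<psi> + (rhat r u - of_real (mass r))"
    unfolding levy_exponent_def by (simp add: algebra_simps)
  then show ?thesis
    using frullani[OF A_pos, of u] unfolding \<psi>_def[symmetric] by (simp add: exp_add)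
qed

end



lemma one_minus_exp_le: "1 - exp (- y) \<le> (y::real)"
  using exp_ge_add_one_self[of "-y"] by simp

lemma exp_diff_bound:
  fixes p q :: real
  shows "\<bar>exp (- p) - exp (- q)\<bar> \<le> (exp (- p) + exp (- q)) * \<bar>p - q\<bar>"
proof -
  have main: "\<bar>exp (- p) - exp (- q)\<bar> \<le> (exp (- p) + exp (- q)) * \<bar>p - q\<bar>" if pq: "p \<le> q" for p q :: real
  proof -
    have "exp (- p) - exp (- q) = exp (- p) * (1 - exp (- (q - p)))"
      by (simp add: algebra_simps exp_diff exp_minus field_simps)
    also have "\<dots> \<le> exp (- p) * (q - p)"
      by (intro mult_left_mono one_minus_exp_le) simp
    also have "\<dots> \<le> (exp (- p) + exp (- q)) * \<bar>p - q\<bar>"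
    proof -
      have "exp (- p) * (q - p) \<le> (exp (- p) + exp (- q)) * (q - p)"
        using pq by (intro mult_right_mono) auto
      then show ?thesis using pq by (simp add: abs_if)
    qed
    finally have "exp (- p) - exp (- q) \<le> (exp (- p) + exp (- q)) * \<bar>p - q\<bar>" .
    moreover have "exp (- q) \<le> exp (- p)" using pq by simp
    ultimately show ?thesis by simp
  qed
  show ?thesis
  proof (cases "p \<le> q")
    case True then show ?thesis by (rule main)
  next
    case False
    then have "\<bar>exp (- q) - exp (- p)\<bar> \<le> (exp (- q) + exp (- p)) * \<bar>q - p\<bar>" by (intro main) simp
    then show ?thesis by (simp add: abs_minus_commute add.commute)
  qed
qed

lemma sqrt_diff_sq_bound:
  fixes p q :: real
  assumes "0 \<le> p" "0 \<le> q" "0 < p + q"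
  shows "(sqrt p - sqrt q)\<^sup>2 \<le> (p - q)\<^sup>2 / (p + q)"
proof -
  have e: "(sqrt p - sqrt q)\<^sup>2 * (sqrt p + sqrt q)\<^sup>2 = (p - q)\<^sup>2"
    using assms by (simp add: power_mult_distrib[symmetric] algebra_simps power2_eq_square)
  have "p + q \<le> (sqrt p + sqrt q)\<^sup>2"
    using assms by (simp add: power2_eq_square algebra_simps real_sqrt_mult[symmetric])
  then have "(sqrt p - sqrt q)\<^sup>2 * (p + q) \<le> (sqrt p - sqrt q)\<^sup>2 * (sqrt p + sqrt q)\<^sup>2"
    by (intro mult_left_mono) auto
  then show ?thesis using assms e by (simp add: le_divide_eq)
qed

lemma x_over_one_minus_exp:
  fixes x :: real assumes "0 < x"
  shows "x / (1 - exp (- x)) \<le> 1 + x"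
proof -
  have pos: "0 < 1 - exp (- x)" using assms by simp
  have "(1 + x) * exp (- x) \<le> 1"
  proof -
    have "1 + x \<le> exp x" by (rule exp_ge_add_one_self)
    then have "(1 + x) * exp (- x) \<le> exp x * exp (- x)" by (intro mult_right_mono) auto
    then show ?thesis by (simp add: exp_minus_inverse)
  qed
  then have "x \<le> (1 + x) * (1 - exp (- x))" by (simp add: algebra_simps)
  then show ?thesis using pos by (simp add: divide_le_eq)
qed

lemma poly_exp_bound:
  fixes x al :: real assumes "0 < al" "0 \<le> x"
  shows "(1 + x) * exp (- (al * x)) \<le> (1 + 2 / al) * exp (- (al / 2 * x))"
proof -
  have "al / 2 * x \<le> exp (al / 2 * x)" using exp_ge_add_one_self[of "al/2*x"] by linarith
  then have "x \<le> 2 / al * exp (al / 2 * x)" using assms by (simp add: field_simps)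
  moreover have "1 \<le> exp (al / 2 * x)" using assms by simp
  ultimately have "1 + x \<le> exp (al / 2 * x) + 2 / al * exp (al / 2 * x)" by linarith
  then have "1 + x \<le> (1 + 2 / al) * exp (al / 2 * x)" by (simp add: distrib_right)
  then have "(1 + x) * exp (- (al * x)) \<le> (1 + 2 / al) * exp (al / 2 * x) * exp (- (al * x))"
    by (intro mult_right_mono) auto
  also have "\<dots> = (1 + 2 / al) * exp (- (al / 2 * x))"
    by (simp add: mult.assoc exp_add[symmetric])
  finally show ?thesis .
qed



lemma class_r:
  fixes al au bl T A a :: real and th :: "real \<Rightarrow> real"
  assumes al: "0 < al" and bl: "0 < bl" and T: "0 \<le> T" and a: "al \<le> a" "a \<le> au"
    and Adef: "A = au + 1 + (T + 1) / bl"
    and thmeas[measurable]: "th \<in> borel_measurable borel" and thT: "\<And>x. \<bar>th x\<bar> \<le> T"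
    and thz: "\<And>x. x < bl \<Longrightarrow> th x = 0"
  defines "r \<equiv> (\<lambda>x. if 0 < x then levy_dens a th x - gd A x else 0)"
  shows "cpr A r" "\<And>x. x \<le> 0 \<Longrightarrow> r x = 0" "\<And>x. 0 < x \<Longrightarrow> levy_dens a th x = gd A x + r x"
    "\<And>x. 0 < x \<Longrightarrow> (1 - exp (- x)) * (exp (- (a * x + th x)) / x) \<le> r x"
    "\<And>x. 0 < x \<Longrightarrow> r x = exp (- (a * x + th x)) / x - exp (- (A * x)) / x"
proof -
  have A: "0 < A" using Adef al a bl T by (smt (verit) divide_nonneg_pos)
  show rx: "r x = exp (- (a * x + th x)) / x - exp (- (A * x)) / x" if "0 < x" for x
    using that unfolding r_def levy_dens_def gd_def by (simp add: algebra_simps)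
  show "r x = 0" if "x \<le> 0" for x using that unfolding r_def by simp
  show "levy_dens a th x = gd A x + r x" if "0 < x" for x using that unfolding r_def by simp
  have gap: "x \<le> A * x - (a * x + th x)" if x: "0 < x" for x
  proof (cases "x < bl")
    case True
    have "(au + 1 - a) * x \<le> (A - a) * x" using x Adef T bl by (intro mult_right_mono) auto
    moreover have "x \<le> (au + 1 - a) * x" using x a by (simp add: mult_le_cancel_right1)
    ultimately show ?thesis using thz[OF True] by (simp add: algebra_simps)
  next
    case False
    have "(T + 1) / bl * bl \<le> (T + 1) / bl * x"
      using False T bl by (intro mult_left_mono) auto
    then have "T + 1 \<le> (T + 1) / bl * x" using bl by simp
    moreover have "(T + 1) / bl * x \<le> (A - a) * x - x"
    proof -
      have "1 + (T + 1) / bl \<le> A - a" using Adef a by simp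
      then have "(1 + (T + 1) / bl) * x \<le> (A - a) * x" using x by (intro mult_right_mono) auto
      then show ?thesis by (simp add: algebra_simps)
    qed
    ultimately have "x + T \<le> (A - a) * x" using bl by linarith
    then show ?thesis using thT[of x] by (simp add: algebra_simps abs_le_iff)
  qed
  show lower: "(1 - exp (- x)) * (exp (- (a * x + th x)) / x) \<le> r x" if x: "0 < x" for x
  proof -
    have "exp (- (A * x)) = exp (- (a * x + th x)) * exp (- (A * x - (a * x + th x)))"
      by (simp add: exp_add[symmetric])
    moreover have "exp (- (A * x - (a * x + th x))) \<le> exp (- x)" using gap[OF x] by simp
    ultimately have "exp (- (A * x)) \<le> exp (- (a * x + th x)) * exp (- x)"
      by (simp add: mult_left_mono)
    then have "(1 - exp (- x)) * exp (- (a * x + th x)) \<le> exp (- (a * x + th x)) - exp (- (A * x))"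
      by (simp add: algebra_simps)
    then have "(1 - exp (- x)) * exp (- (a * x + th x)) / x \<le> (exp (- (a * x + th x)) - exp (- (A * x))) / x"
      using x by (intro divide_right_mono) auto
    then show ?thesis using x by (simp add: rx diff_divide_distrib)
  qed
  have rnn: "0 \<le> r x" for x
  proof (cases "0 < x")
    case True
    have "0 \<le> (1 - exp (- x)) * (exp (- (a * x + th x)) / x)" using True by simp
    then show ?thesis using lower[OF True] by linarith
  next
    case False then show ?thesis unfolding r_def by simp
  qed
  have rm[measurable]: "r \<in> borel_measurable borel"
    unfolding r_def levy_dens_def gd_def by measurable
  have rub: "r x \<le> (A + exp T / bl) * (indicator {0<..} x * exp (- (al * x)))" for x
  proof (cases "0 < x")
    case x: True
    show ?thesis
    proof (cases "x < bl")
      case True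
      have "r x = exp (- (a * x)) * ((1 - exp (- ((A - a) * x))) / x)"
        using x thz[OF True] by (simp add: rx algebra_simps exp_add[symmetric] diff_divide_distrib)
      also have "\<dots> \<le> exp (- (al * x)) * A"
      proof (intro mult_mono)
        show "exp (- (a * x)) \<le> exp (- (al * x))" using a x by (simp add: mult_right_mono)
        have "(1 - exp (- ((A - a) * x))) \<le> (A - a) * x" by (rule one_minus_exp_le)
        then have "(1 - exp (- ((A - a) * x))) / x \<le> A - a" using x by (simp add: divide_le_eq)
        then show "(1 - exp (- ((A - a) * x))) / x \<le> A" using a al by linarith
        have "0 \<le> (T + 1) / bl" using T bl by simp
        then have "0 \<le> A - a" using Adef a by linarith
        then have "0 \<le> (A - a) * x" using x by simp
        then have "0 \<le> 1 - exp (- ((A - a) * x))" by simp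
        then show "0 \<le> (1 - exp (- ((A - a) * x))) / x" using x by simp
      qed simp
      also have "\<dots> \<le> (A + exp T / bl) * (indicator {0<..} x * exp (- (al * x)))"
        using x bl by (simp add: mult.commute)
      finally show ?thesis .
    next
      case False
      have "r x \<le> exp (- (a * x + th x)) / x" using x by (simp add: rx)
      also have "\<dots> \<le> exp (T - al * x) / bl"
      proof (rule frac_le)
        show "exp (- (a * x + th x)) \<le> exp (T - al * x)"
          using thT[of x] a x by (simp add: abs_le_iff) (smt (verit) mult_right_mono)
      qed (use False bl in auto)
      also have "\<dots> = exp T / bl * exp (- (al * x))" by (simp add: exp_diff exp_minus field_simps)
      also have "\<dots> \<le> (A + exp T / bl) * (indicator {0<..} x * exp (- (al * x)))"
        using x A by (simp add: mult_right_mono del: times_divide_eq_left times_divide_eq_right)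
      finally show ?thesis .
    qed
  next
    case False then show ?thesis unfolding r_def using A bl by simp
  qed
  have rint: "integrable lborel r"
  proof (rule Bochner_Integration.integrable_bound[of _ "\<lambda>x. (A + exp T / bl) * (indicator {0<..} x * exp (- (al * x)))"])
    show "integrable lborel (\<lambda>x. (A + exp T / bl) * (indicator {0<..} x * exp (- (al * x))))"
      using expA_integrable[OF al] by simp
    show "AE x in lborel. norm (r x) \<le> norm ((A + exp T / bl) * (indicator {0<..} x * exp (- (al * x))))"
      using rub rnn A bl by (intro AE_I2) (simp add: abs_of_nonneg)
  qed simp
  show "cpr A r" by unfold_locales (use A rnn rint in auto)
qed



lemma pair_bound:
  fixes al bl T A a0 a d s x :: real and th0 th r0 r :: "real \<Rightarrow> real"
  assumes al: "0 < al" and bl: "0 < bl" and T: "0 \<le> T" and x: "0 < x"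
    and a0: "al \<le> a0" and a: "al \<le> a" and d: "d = \<bar>a - a0\<bar>"
    and th0T: "\<bar>th0 x\<bar> \<le> T" and thT: "\<bar>th x\<bar> \<le> T"
    and th0z: "x < bl \<Longrightarrow> th0 x = 0" and thz: "x < bl \<Longrightarrow> th x = 0"
    and s: "\<bar>th x - th0 x\<bar> \<le> s"
    and r0x: "r0 x = exp (- (a0 * x + th0 x)) / x - exp (- (A * x)) / x"
    and rx: "r x = exp (- (a * x + th x)) / x - exp (- (A * x)) / x"
    and low0: "(1 - exp (- x)) * (exp (- (a0 * x + th0 x)) / x) \<le> r0 x"
    and low: "(1 - exp (- x)) * (exp (- (a * x + th x)) / x) \<le> r x"
  shows "(sqrt (r0 x) - sqrt (r x))\<^sup>2 \<le> (4 * exp T * (1 + 1 / (bl * (1 - exp (- bl)))) * (1 + 2 / al)) * exp (- (al / 2 * x)) * (d\<^sup>2 + s\<^sup>2)"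
proof -
  define E0 where "E0 = a0 * x + th0 x"
  define E where "E = a * x + th x"
  define V0 where "V0 = exp (- E0)"
  define V where "V = exp (- E)"
  define W where "W = V0 + V"
  define D where "D = x * (1 - exp (- x))"
  define c1 where "c1 = 1 / (bl * (1 - exp (- bl)))"
  have V0p: "0 < V0" and Vp: "0 < V" unfolding V0_def V_def by auto
  have Wp: "0 < W" unfolding W_def using V0p Vp by simp
  have ex: "0 < 1 - exp (- x)" using x by simp
  have Dp: "0 < D" unfolding D_def using x ex by simp
  have c1p: "0 \<le> c1" unfolding c1_def using bl by simp
  have "0 \<le> (1 - exp (- x)) * (exp (- (a0 * x + th0 x)) / x)" using ex x by simp
  then have r00: "0 \<le> r0 x" using low0 by linarith
  have "0 \<le> (1 - exp (- x)) * (exp (- (a * x + th x)) / x)" using ex x by simp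
  then have r0': "0 \<le> r x" using low by linarith
  have sum_low: "W * D / x\<^sup>2 \<le> r0 x + r x"
  proof -
    have "W * D / x\<^sup>2 = (1 - exp (- x)) * (V0 / x) + (1 - exp (- x)) * (V / x)"
      unfolding W_def D_def using x by (simp add: power2_eq_square field_simps)
    then show ?thesis using low0 low unfolding V0_def V_def E0_def E_def by linarith
  qed
  have "0 < W * D / x\<^sup>2" using Wp Dp x by simp
  then have sum_pos: "0 < r0 x + r x" using sum_low by linarith
  have diff: "r0 x - r x = (V0 - V) / x"
    unfolding V0_def V_def E0_def E_def r0x rx using x by (simp add: field_simps)
  have step1: "(sqrt (r0 x) - sqrt (r x))\<^sup>2 \<le> (r0 x - r x)\<^sup>2 / (r0 x + r x)"
    by (rule sqrt_diff_sq_bound[OF r00 r0' sum_pos])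
  also have "\<dots> \<le> ((V0 - V) / x)\<^sup>2 / (W * D / x\<^sup>2)"
  proof -
    have pos: "0 < W * D / x\<^sup>2" using Wp Dp x by simp
    show ?thesis unfolding diff
      by (rule divide_left_mono[OF sum_low]) (simp, rule mult_pos_pos[OF sum_pos pos])
  qed
  also have "\<dots> = (V0 - V)\<^sup>2 / (W * D)"
    using x by (simp add: power_divide)
  also have "\<dots> \<le> (W * \<bar>E0 - E\<bar>)\<^sup>2 / (W * D)"
  proof (intro divide_right_mono)
    have "\<bar>V0 - V\<bar> \<le> W * \<bar>E0 - E\<bar>" unfolding V0_def V_def W_def by (rule exp_diff_bound)
    then show "(V0 - V)\<^sup>2 \<le> (W * \<bar>E0 - E\<bar>)\<^sup>2"
      by (metis abs_ge_zero power2_abs power_mono)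
  qed (use Wp Dp in simp)
  also have "\<dots> = W * ((E0 - E)\<^sup>2 / D)"
    using Wp Dp by (simp add: power2_eq_square field_simps)
  finally have st: "(sqrt (r0 x) - sqrt (r x))\<^sup>2 \<le> W * ((E0 - E)\<^sup>2 / D)" .
  have Wb: "W \<le> 2 * exp T * exp (- (al * x))"
  proof -
    have "V0 \<le> exp T * exp (- (al * x))"
    proof -
      have "al * x \<le> a0 * x" using a0 x by (simp add: mult_right_mono)
      then have "- E0 \<le> T + - (al * x)" unfolding E0_def using th0T by (simp add: abs_le_iff)
      then show ?thesis unfolding V0_def by (simp add: exp_add[symmetric])
    qed
    moreover have "V \<le> exp T * exp (- (al * x))"
    proof -
      have "al * x \<le> a * x" using a x by (simp add: mult_right_mono)
      then have "- E \<le> T + - (al * x)" unfolding E_def using thT by (simp add: abs_le_iff)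
      then show ?thesis unfolding V_def by (simp add: exp_add[symmetric])
    qed
    ultimately show ?thesis unfolding W_def by simp
  qed
  have Qb: "(E0 - E)\<^sup>2 / D \<le> 2 * (1 + c1) * (1 + x) * (d\<^sup>2 + s\<^sup>2)"
  proof (cases "x < bl")
    case True
    have "(E0 - E)\<^sup>2 = d\<^sup>2 * x\<^sup>2"
      unfolding E0_def E_def d using th0z[OF True] thz[OF True]
      by (simp add: power2_eq_square algebra_simps)
    then have "(E0 - E)\<^sup>2 / D = d\<^sup>2 * (x\<^sup>2 / D)" by simp
    also have "\<dots> \<le> d\<^sup>2 * (1 + x)"
    proof -
      have "x\<^sup>2 / D = x / (1 - exp (- x))" unfolding D_def using x by (simp add: power2_eq_square)
      then show ?thesis using x_over_one_minus_exp[OF x] by (metis mult_left_mono zero_le_power2)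
    qed
    also have "\<dots> \<le> 2 * (1 + c1) * (1 + x) * (d\<^sup>2 + s\<^sup>2)"
    proof -
      have "d\<^sup>2 * (1 + x) \<le> (d\<^sup>2 + s\<^sup>2) * (1 + x)" using x by (intro mult_right_mono) auto
      also have "\<dots> \<le> (2 * (1 + c1)) * ((d\<^sup>2 + s\<^sup>2) * (1 + x))"
      proof -
        have y0: "0 \<le> (d\<^sup>2 + s\<^sup>2) * (1 + x)" using x by simp
        have k1: "1 \<le> 2 * (1 + c1)" using c1p by simp
        show ?thesis using mult_right_mono[OF k1 y0] by simp
      qed
      finally show ?thesis by (simp add: ac_simps)
    qed
    finally show ?thesis .
  next
    case False
    have e1: "\<bar>E0 - E\<bar> \<le> d * x + s"
    proof -
      have "E0 - E = (a0 - a) * x + (th0 x - th x)" unfolding E0_def E_def by (simp add: algebra_simps)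
      then have "\<bar>E0 - E\<bar> \<le> \<bar>(a0 - a) * x\<bar> + \<bar>th0 x - th x\<bar>" by (simp only: abs_triangle_ineq)
      then have "\<bar>E0 - E\<bar> \<le> \<bar>a0 - a\<bar> * x + \<bar>th0 x - th x\<bar>" using x by (simp add: abs_mult)
      then show ?thesis unfolding d using s by (simp add: abs_minus_commute)
    qed
    have s0: "0 \<le> s" using s by linarith
    have "(E0 - E)\<^sup>2 \<le> (d * x + s)\<^sup>2"
      using e1 by (metis abs_ge_zero power2_abs power_mono)
    also have "\<dots> \<le> 2 * (d\<^sup>2 * x\<^sup>2) + 2 * s\<^sup>2"
    proof -
      have "0 \<le> (d * x - s)\<^sup>2" by simp
      then show ?thesis by (simp add: power2_sum power2_diff power_mult_distrib)
    qed
    finally have e2: "(E0 - E)\<^sup>2 \<le> 2 * (d\<^sup>2 * x\<^sup>2) + 2 * s\<^sup>2" .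
    have Dbl: "1 / D \<le> c1"
    proof -
      have "bl * (1 - exp (- bl)) \<le> x * (1 - exp (- x))"
        using False bl by (intro mult_mono) auto
      moreover have "0 < bl * (1 - exp (- bl))" using bl by simp
      ultimately show ?thesis unfolding c1_def D_def by (intro divide_left_mono) auto
    qed
    have "(E0 - E)\<^sup>2 / D \<le> (2 * (d\<^sup>2 * x\<^sup>2) + 2 * s\<^sup>2) / D"
      using e2 Dp by (intro divide_right_mono) auto
    also have "\<dots> = 2 * d\<^sup>2 * (x\<^sup>2 / D) + 2 * s\<^sup>2 * (1 / D)" by (simp add: add_divide_distrib)
    also have "\<dots> \<le> 2 * d\<^sup>2 * (1 + x) + 2 * s\<^sup>2 * c1"
    proof -
      have "x\<^sup>2 / D = x / (1 - exp (- x))" unfolding D_def using x by (simp add: power2_eq_square)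
      then have "x\<^sup>2 / D \<le> 1 + x" using x_over_one_minus_exp[OF x] by simp
      then show ?thesis using Dbl by (intro add_mono mult_left_mono) auto
    qed
    also have "\<dots> \<le> 2 * (1 + c1) * (1 + x) * (d\<^sup>2 + s\<^sup>2)"
    proof -
      have "2 * d\<^sup>2 * (1 + x) \<le> 2 * (1 + c1) * (1 + x) * d\<^sup>2"
        using c1p x by (simp add: algebra_simps mult_nonneg_nonneg)
      moreover have "2 * s\<^sup>2 * c1 \<le> 2 * (1 + c1) * (1 + x) * s\<^sup>2"
      proof -
        have "c1 \<le> (1 + c1) * (1 + x)" using c1p x by (simp add: algebra_simps mult_nonneg_nonneg)
        then have "2 * s\<^sup>2 * c1 \<le> 2 * s\<^sup>2 * ((1 + c1) * (1 + x))" by (intro mult_left_mono) auto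
        moreover have "2 * (1 + c1) * (1 + x) * s\<^sup>2 = 2 * s\<^sup>2 * ((1 + c1) * (1 + x))" by (simp add: ac_simps)
        ultimately show ?thesis by linarith
      qed
      ultimately show ?thesis by (simp add: algebra_simps)
    qed
    finally show ?thesis .
  qed
  have "W * ((E0 - E)\<^sup>2 / D) \<le> (2 * exp T * exp (- (al * x))) * (2 * (1 + c1) * (1 + x) * (d\<^sup>2 + s\<^sup>2))"
    using Wb Qb Wp Dp by (intro mult_mono) auto
  also have "\<dots> = (4 * exp T * (1 + c1) * (d\<^sup>2 + s\<^sup>2)) * ((1 + x) * exp (- (al * x)))"
    by (simp add: algebra_simps)
  also have "\<dots> \<le> (4 * exp T * (1 + c1) * (d\<^sup>2 + s\<^sup>2)) * ((1 + 2 / al) * exp (- (al / 2 * x)))"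
    using poly_exp_bound[OF al, of x] x c1p by (intro mult_left_mono) auto
  also have "\<dots> = (4 * exp T * (1 + c1) * (1 + 2 / al)) * exp (- (al / 2 * x)) * (d\<^sup>2 + s\<^sup>2)"
    by (simp only: mult_ac)
  finally show ?thesis using st unfolding c1_def by linarith
qed



lemma levy_law_eq:
  fixes al au bl T A a :: real and th :: "real \<Rightarrow> real" and P :: "real measure"
  assumes al: "0 < al" and bl: "0 < bl" and T: "0 \<le> T" and a: "al \<le> a" "a \<le> au"
    and Adef: "A = au + 1 + (T + 1) / bl"
    and thmeas[measurable]: "th \<in> borel_measurable borel" and thT: "\<And>x. \<bar>th x\<bar> \<le> T"
    and thz: "\<And>x. x < bl \<Longrightarrow> th x = 0"
    and law: "is_levy_law (levy_dens a th) P"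
  shows "P = density lborel (pd A (\<lambda>x. if 0 < x then levy_dens a th x - gd A x else 0))"
proof -
  define r where "r = (\<lambda>x. if 0 < x then levy_dens a th x - gd A x else 0)"
  note cls = class_r[OF al bl T a Adef thmeas thT thz, folded r_def]
  have cr: "cpr A r" and rz: "\<And>x. x \<le> 0 \<Longrightarrow> r x = 0" and vx: "\<And>x. 0 < x \<Longrightarrow> levy_dens a th x = gd A x + r x"
    using cls(1) unfolding r_def by (auto simp: levy_dens_def gd_def)
  interpret cpr A r by (rule cr)
  have vm: "levy_dens a th \<in> borel_measurable borel" unfolding levy_dens_def by measurable
  have rdP: "real_distribution P"
  proof -
    have "prob_space P" "sets P = sets borel" using law unfolding is_levy_law_def by auto
    then show ?thesis unfolding real_distribution_def real_distribution_axioms_def by simp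
  qed
  have "P = density lborel (pd A r)"
  proof (rule Levy_uniqueness[OF rdP pd_real_dist])
    show "char P = char (density lborel (pd A r))"
    proof
      fix u
      have "char P u = exp (levy_exponent (levy_dens a th) u)" using law unfolding is_levy_law_def by auto
      also have "\<dots> = khat A u * exp (rhat r u - complex_of_real (mass r))"
        by (rule levy_exponent_split[OF rz vm vx])
      also have "\<dots> = char (density lborel (pd A r)) u" by (rule pd_char[symmetric])
      finally show "char P u = char (density lborel (pd A r)) u" .
    qed
  qed
  then show ?thesis unfolding r_def .
qed

lemma grid_theta_props:
  fixes b :: "nat \<Rightarrow> real" and N :: nat
  assumes "2 \<le> N" "b 1 = bl" "b N = bu" "\<forall>k\<in>{1..<N}. b k < b (Suc k)" "0 < bl" "0 \<le> thb"
    and \<rho>t: "\<forall>k\<in>{1..<N}. \<bar>\<rho> k\<bar> \<le> thb \<and> \<bar>t k\<bar> \<le> thb"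
  shows "grid_theta b N \<rho> t \<in> borel_measurable borel"
    "\<And>x. \<bar>grid_theta b N \<rho> t x\<bar> \<le> real N * thb * (1 + bu)"
    "\<And>x. x < bl \<Longrightarrow> grid_theta b N \<rho> t x = 0"
proof -
  have mono: "b j \<le> b k" if "1 \<le> j" "j \<le> k" "k \<le> N" for j k
    using that(2,3)
  proof (induction k rule: dec_induct)
    case base then show ?case by simp
  next
    case (step n)
    then have "b n < b (Suc n)" using assms(4) that(1) by auto
    then show ?case using step by simp
  qed
  have bu0: "0 < bu" using mono[of 1 N] assms by auto
  show "grid_theta b N \<rho> t \<in> borel_measurable borel"
    unfolding grid_theta_def by measurable
  have termb: "\<bar>indicator {b k<..b (Suc k)} x * (\<rho> k + t k * x)\<bar> \<le> thb * (1 + bu)" if k: "k \<in> {1..<N}" for k x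
  proof (cases "x \<in> {b k<..b (Suc k)}")
    case True
    have "b 1 \<le> b k" using k by (intro mono) auto
    moreover have "b (Suc k) \<le> b N" using k by (intro mono) auto
    ultimately have x: "0 < x" "x \<le> bu" using True assms by auto
    have "\<bar>\<rho> k + t k * x\<bar> \<le> \<bar>\<rho> k\<bar> + \<bar>t k * x\<bar>" by (rule abs_triangle_ineq)
    also have "\<bar>t k * x\<bar> = \<bar>t k\<bar> * x" using x by (simp add: abs_mult)
    finally have "\<bar>\<rho> k + t k * x\<bar> \<le> \<bar>\<rho> k\<bar> + \<bar>t k\<bar> * x" .
    also have "\<dots> \<le> thb + thb * bu" using \<rho>t k x by (intro add_mono mult_mono) auto
    finally show ?thesis using True by (simp add: algebra_simps)
  next
    case False then show ?thesis using assms bu0 by simp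
  qed
  show "\<bar>grid_theta b N \<rho> t x\<bar> \<le> real N * thb * (1 + bu)" for x
  proof -
    have "\<bar>grid_theta b N \<rho> t x\<bar> \<le> (\<Sum>k\<in>{1..<N}. \<bar>indicator {b k<..b (Suc k)} x * (\<rho> k + t k * x)\<bar>)"
      unfolding grid_theta_def by (rule sum_abs)
    also have "\<dots> \<le> of_nat (card {1..<N}) * (thb * (1 + bu))"
      by (rule sum_bounded_above) (rule termb)
    also have "\<dots> \<le> real N * (thb * (1 + bu))"
    proof (rule mult_right_mono)
      show "0 \<le> thb * (1 + bu)" using assms bu0 by simp
    qed simp
    finally show ?thesis by (simp add: mult.assoc)
  qed
  show "grid_theta b N \<rho> t x = 0" if x: "x < bl" for x
    unfolding grid_theta_def
  proof (rule sum.neutral, intro ballI)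
    fix k assume k: "k \<in> {1..<N}"
    have "b 1 \<le> b k" using k by (intro mono) auto
    then have "x \<notin> {b k<..b (Suc k)}" using x assms by auto
    then show "indicator {b k<..b (Suc k)} x * (\<rho> k + t k * x) = 0" by simp
  qed
qed



theorem lemmaA8:
  fixes bl bu al au thb a0 :: real and th0 :: "real \<Rightarrow> real"
    and N :: nat and b :: "nat \<Rightarrow> real"
  assumes "0 < bl" "bl < bu" "0 < al" "al < au" "0 < thb"
    and "a0 \<in> {al..au}"
    and "th0 \<in> borel_measurable borel"
    and "\<forall>x. x \<notin> {bl..bu} \<longrightarrow> th0 x = 0"
    and "\<exists>c < thb. \<forall>x. \<bar>th0 x\<bar> \<le> c"
    and "2 \<le> N" "b 1 = bl" "b N = bu" "\<forall>k\<in>{1..<N}. b k < b (Suc k)"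
  shows "\<exists>C. \<forall>a \<rho> t P0 P.
           a \<in> {al..au} \<and> (\<forall>k\<in>{1..<N}. \<bar>\<rho> k\<bar> \<le> thb \<and> \<bar>t k\<bar> \<le> thb) \<and>
           is_levy_law (levy_dens a0 th0) P0 \<and>
           is_levy_law (levy_dens a (grid_theta b N \<rho> t)) P \<longrightarrow>
           hellinger P0 P \<le> C * (\<bar>a - a0\<bar> + (SUP x. \<bar>grid_theta b N \<rho> t x - th0 x\<bar>))"
proof -
  note bl = assms(1) and al = assms(3)
  obtain c0 where c0: "c0 < thb" "\<And>x. \<bar>th0 x\<bar> \<le> c0" using assms(9) by blast
  define T where "T = real N * thb * (1 + bu) + thb"
  have bu0: "0 < bu" using assms by simp
  have T0: "0 \<le> T" unfolding T_def using assms bu0 by simp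
  have th0T: "\<bar>th0 x\<bar> \<le> T" for x
  proof -
    have "0 \<le> real N * thb * (1 + bu)" using assms bu0 by simp
    then show ?thesis using c0(2)[of x] c0(1) unfolding T_def by linarith
  qed
  have th0z: "th0 x = 0" if "x < bl" for x using assms(8) that by auto
  have th0m[measurable]: "th0 \<in> borel_measurable borel" using assms(7) .
  define A where "A = au + 1 + (T + 1) / bl"
  define K where "K = 4 * exp T * (1 + 1 / (bl * (1 - exp (- bl)))) * (1 + 2 / al)"
  define I0 where "I0 = (\<integral>x. indicator {0<..} x * exp (- (al / 2 * x)) \<partial>lborel)"
  have K0: "0 \<le> K" unfolding K_def using bl al by (simp add: mult_nonneg_nonneg)
  have alh: "0 < al / 2" using al by simp
  have I0int: "integrable lborel (\<lambda>x. indicator {0<..} x * exp (- (al / 2 * x)))"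
    using expA_integrable[OF alh] .
  have I00: "0 \<le> I0" unfolding I0_def by (rule Bochner_Integration.integral_nonneg) simp
  define C where "C = sqrt (K * I0 / 2)"
  show ?thesis
  proof (rule exI[of _ C], intro allI impI)
    fix a \<rho> t P0 P
    assume H: "a \<in> {al..au} \<and> (\<forall>k\<in>{1..<N}. \<bar>\<rho> k\<bar> \<le> thb \<and> \<bar>t k\<bar> \<le> thb) \<and>
           is_levy_law (levy_dens a0 th0) P0 \<and> is_levy_law (levy_dens a (grid_theta b N \<rho> t)) P"
    define th where "th = grid_theta b N \<rho> t"
    note gp = grid_theta_props[OF assms(10-13) bl less_imp_le[OF assms(5)], of \<rho> t, folded th_def]
    have thm'[measurable]: "th \<in> borel_measurable borel" using gp(1) H by auto
    have thT: "\<bar>th x\<bar> \<le> T" for x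
    proof -
      have "\<bar>th x\<bar> \<le> real N * thb * (1 + bu)" using gp(2) H by auto
      then show ?thesis unfolding T_def using assms by linarith
    qed
    have thz: "th x = 0" if "x < bl" for x using gp(3) H that by auto
    have a: "al \<le> a" "a \<le> au" using H by auto
    have a0: "al \<le> a0" "a0 \<le> au" using assms(6) by auto
    define r0 where "r0 = (\<lambda>x. if 0 < x then levy_dens a0 th0 x - gd A x else 0)"
    define r where "r = (\<lambda>x. if 0 < x then levy_dens a th x - gd A x else 0)"
    note cl0 = class_r[of al bl T a0 au A th0, OF al bl T0 a0 A_def th0m th0T th0z]
    note cl = class_r[of al bl T a au A th, OF al bl T0 a A_def thm' thT thz]
    have cr0: "cpr A r0" using cl0(1) unfolding r0_def .
    have cr: "cpr A r" using cl(1) unfolding r_def .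
    interpret cp: cpr2 A r0 r by (intro cpr2.intro cr0 cr)
    have P0eq: "P0 = density lborel (pd A r0)"
      unfolding r0_def using levy_law_eq[OF al bl T0 a0 A_def th0m th0T th0z] H by auto
    have Peq: "P = density lborel (pd A r)"
      unfolding r_def using levy_law_eq[OF al bl T0 a A_def thm' thT thz] H unfolding th_def by auto
    have hsq: "(hellinger P0 P)\<^sup>2 = 1 - (\<integral>x. sqrt (pd A r0 x * pd A r x) \<partial>lborel)"
      unfolding P0eq Peq
      by (rule hellinger_density) (use cp.c0.pd_nn cp.c1.pd_nn cp.c0.pd_nnint cp.c1.pd_nnint in auto)
    define s where "s = (SUP x. \<bar>grid_theta b N \<rho> t x - th0 x\<bar>)"
    have bdd: "bdd_above (range (\<lambda>x. \<bar>th x - th0 x\<bar>))"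
    proof (rule bdd_aboveI2)
      fix x show "\<bar>th x - th0 x\<bar> \<le> 2 * T" using thT[of x] th0T[of x] by linarith
    qed
    have sx: "\<bar>th x - th0 x\<bar> \<le> s" for x
      unfolding s_def th_def[symmetric] by (rule cSUP_upper[OF _ bdd]) simp
    have s0: "0 \<le> s" using sx[of 0] by linarith
    define d where "d = \<bar>a - a0\<bar>"
    have d0: "0 \<le> d" unfolding d_def by simp
    have pw: "(sqrt (r0 x) - sqrt (r x))\<^sup>2 \<le> K * (d\<^sup>2 + s\<^sup>2) * (indicator {0<..} x * exp (- (al / 2 * x)))" for x
    proof (cases "0 < x")
      case True
      have "(sqrt (r0 x) - sqrt (r x))\<^sup>2 \<le> K * exp (- (al / 2 * x)) * (d\<^sup>2 + s\<^sup>2)"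
        unfolding K_def
      proof (rule pair_bound[OF al bl T0 True a0(1) a(1) d_def th0T thT th0z thz sx])
        show "r0 x = exp (- (a0 * x + th0 x)) / x - exp (- (A * x)) / x" using cl0(5)[of x] True unfolding r0_def by blast
        show "r x = exp (- (a * x + th x)) / x - exp (- (A * x)) / x" using cl(5)[of x] True unfolding r_def by blast
        show "(1 - exp (- x)) * (exp (- (a0 * x + th0 x)) / x) \<le> r0 x" using cl0(4)[of x] True unfolding r0_def by blast
        show "(1 - exp (- x)) * (exp (- (a * x + th x)) / x) \<le> r x" using cl(4)[of x] True unfolding r_def by blast
      qed
      then show ?thesis using True by (simp add: ac_simps)
    next
      case False
      then show ?thesis unfolding r0_def r_def by simp
    qed
    define D where "D = (\<integral>x. (sqrt (r0 x) - sqrt (r x))\<^sup>2 \<partial>lborel)"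
    have Deq: "D = mass r0 + mass r - 2 * cp.cc"
    proof -
      have "D = (\<integral>x. r0 x + r x - 2 * sqrt (r0 x * r x) \<partial>lborel)"
        unfolding D_def
      proof (rule Bochner_Integration.integral_cong[OF refl])
        fix x
        show "(sqrt (r0 x) - sqrt (r x))\<^sup>2 = r0 x + r x - 2 * sqrt (r0 x * r x)"
          using cp.c0.r_nn[of x] cp.c1.r_nn[of x] by (simp add: power2_diff real_sqrt_mult)
      qed
      also have "\<dots> = mass r0 + mass r - 2 * cp.cc"
        unfolding mass_def cp.cc_def using cp.c0.r_int cp.c1.r_int cp.sq_int by simp
      finally show ?thesis .
    qed
    have Dle: "D \<le> K * (d\<^sup>2 + s\<^sup>2) * I0"
    proof -
      have "D \<le> (\<integral>x. K * (d\<^sup>2 + s\<^sup>2) * (indicator {0<..} x * exp (- (al / 2 * x))) \<partial>lborel)"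
        unfolding D_def
      proof (rule integral_mono)
        show "integrable lborel (\<lambda>x. (sqrt (r0 x) - sqrt (r x))\<^sup>2)"
        proof -
          have "integrable lborel (\<lambda>x. r0 x + r x - 2 * sqrt (r0 x * r x))"
            using cp.c0.r_int cp.c1.r_int cp.sq_int by simp
          moreover have "(\<lambda>x. r0 x + r x - 2 * sqrt (r0 x * r x)) = (\<lambda>x. (sqrt (r0 x) - sqrt (r x))\<^sup>2)"
            using cp.c0.r_nn cp.c1.r_nn by (auto simp: power2_diff real_sqrt_mult)
          ultimately show ?thesis by simp
        qed
        show "integrable lborel (\<lambda>x. K * (d\<^sup>2 + s\<^sup>2) * (indicator {0<..} x * exp (- (al / 2 * x))))"
          using I0int by simp
      qed (rule pw)
      also have "\<dots> = K * (d\<^sup>2 + s\<^sup>2) * I0" unfolding I0_def by simp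
      finally show ?thesis .
    qed
    have "(hellinger P0 P)\<^sup>2 \<le> 1 - exp (cp.cc - (mass r0 + mass r) / 2)"
      using hsq cp.affinity_bound by linarith
    also have "\<dots> \<le> (mass r0 + mass r) / 2 - cp.cc"
      using one_minus_exp_le[of "(mass r0 + mass r) / 2 - cp.cc"] by simp
    also have "\<dots> = D / 2" using Deq by simp
    also have "\<dots> \<le> K * I0 / 2 * (d\<^sup>2 + s\<^sup>2)" using Dle by (simp add: ac_simps)
    also have "\<dots> \<le> K * I0 / 2 * (d + s)\<^sup>2"
    proof (rule mult_left_mono)
      show "d\<^sup>2 + s\<^sup>2 \<le> (d + s)\<^sup>2" using d0 s0 by (simp add: power2_sum)
      show "0 \<le> K * I0 / 2" using K0 I00 by simp
    qed
    also have "\<dots> = (C * (d + s))\<^sup>2" unfolding C_def using K0 I00 by (simp add: power_mult_distrib)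
    finally have hle: "(hellinger P0 P)\<^sup>2 \<le> (C * (d + s))\<^sup>2" .
    have "0 \<le> C * (d + s)" unfolding C_def using K0 I00 d0 s0 by (intro mult_nonneg_nonneg) auto
    then have "hellinger P0 P \<le> C * (d + s)"
      using hle by (metis abs_le_square_iff abs_of_nonneg le_less_trans not_le abs_ge_self order_trans)
    then show "hellinger P0 P \<le> C * (\<bar>a - a0\<bar> + (SUP x. \<bar>grid_theta b N \<rho> t x - th0 x\<bar>))"
      unfolding d_def s_def .
  qed
qed


end
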